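(* Let $\mu\in\mathbb F_q\setminus\{0\}$. The number of generators (i.e. $(n-1)$-spaces contained in the quadric) of $\mathcal Q_\mu$ that are totally isotropic with respect to $\perp_0$ is exactly $(q^{n+1}+q^n+1)\prod_{i=1}^{n-2}(q^{n-i}+1)$, where an empty product (when $n=2$) equals $1$.
   Context: Let $q$ be an even prime power and $n\ge 2$ an integer. Let $\mathrm{PG}(2n+1,q)$ have homogeneous coordinates $(X_1,\dots,X_{2n+2})$. Fix $\delta\in\mathbb F_q$ such that $X^2+X+\delta$ is irreducible over $\mathbb F_q$. For $\mu\in\mathbb F_q$ let $\mathcal Q_\mu$ be the elliptic quadric $X_1^2+X_1X_{2n+2}+\delta X_{2n+2}^2+\sum_{i=2}^{n+1}X_iX_{2n+3-i}+\mu(X_{2n}^2+X_{2n}X_{2n+1}+\delta X_{2n+1}^2)=0$, whose generators are $(n-1)$-spaces. Let $\perp_0$ be the symplectic polarity defined by the alternating form $B_0(X,Y)=\sum_{i=1}^{2n+2}X_iY_{2n+3-i}$. *)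

theory Defs
  imports "HOL-Library.Function_Algebras" "HOL-Computational_Algebra.Polynomial"
begin

text \<open>Vectors of F_q^(2n+2) are represented as functions nat => 'a whose support
lies in the coordinate range 1..2n+2 (coordinates X_1, ..., X_(2n+2)).\<close>

definition coordspace :: "nat \<Rightarrow> (nat \<Rightarrow> 'a::zero) set" where
  "coordspace N = {x. \<forall>i. i \<notin> {1..N} \<longrightarrow> x i = 0}"

definition vscale :: "'a::field \<Rightarrow> (nat \<Rightarrow> 'a) \<Rightarrow> (nat \<Rightarrow> 'a)" where
  "vscale c x = (\<lambda>i. c * x i)"

definition Qform :: "nat \<Rightarrow> 'a::field \<Rightarrow> 'a \<Rightarrow> (nat \<Rightarrow> 'a) \<Rightarrow> 'a" where
  "Qform n \<delta> \<mu> X =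
     X 1 ^ 2 + X 1 * X (2*n+2) + \<delta> * X (2*n+2) ^ 2
     + (\<Sum>i=2..n+1. X i * X (2*n+3-i))
     + \<mu> * (X (2*n) ^ 2 + X (2*n) * X (2*n+1) + \<delta> * X (2*n+1) ^ 2)"

definition B0 :: "nat \<Rightarrow> (nat \<Rightarrow> 'a::field) \<Rightarrow> (nat \<Rightarrow> 'a) \<Rightarrow> 'a" where
  "B0 n X Y = (\<Sum>i=1..2*n+2. X i * Y (2*n+3-i))"

text \<open>Generators of Q_mu: projective (n-1)-spaces, i.e. n-dimensional vector subspaces
of F_q^(2n+2), all of whose points lie on the quadric.\<close>
definition generators :: "nat \<Rightarrow> 'a::field \<Rightarrow> 'a \<Rightarrow> (nat \<Rightarrow> 'a) set set" where
  "generators n \<delta> \<mu> = {W. W \<subseteq> coordspace (2*n+2) \<and> module.subspace vscale W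
       \<and> vector_space.dim vscale W = n \<and> (\<forall>x\<in>W. Qform n \<delta> \<mu> x = 0)}"

definition totally_isotropic_B0 :: "nat \<Rightarrow> (nat \<Rightarrow> 'a::field) set \<Rightarrow> bool" where
  "totally_isotropic_B0 n W = (\<forall>x\<in>W. \<forall>y\<in>W. B0 n x y = 0)"

end

theory Submission
  imports Defs "HOL-Library.FuncSet"
begin


interpretation VS: vector_space "vscale :: 'a::field \<Rightarrow> (nat \<Rightarrow> 'a) \<Rightarrow> (nat \<Rightarrow> 'a)"
  by unfold_locales (auto simp: vscale_def fun_eq_iff algebra_simps)

lemma char2:
  assumes "even (card (UNIV::'a::{field,finite} set))"
  shows "(1::'a) + 1 = 0"
proof -
  let ?S = "UNIV - {0::'a}"
  have fermat: "x ^ card ?S = 1" if "x \<noteq> 0" for x :: 'a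
  proof -
    have inj: "inj_on ((*) x) ?S" using that by (auto simp: inj_on_def)
    have im: "(*) x ` ?S = ?S"
    proof
      show "(*) x ` ?S \<subseteq> ?S" using that by auto
      show "?S \<subseteq> (*) x ` ?S"
      proof
        fix y assume "y \<in> ?S"
        then have "y = x * (y / x)" "y / x \<in> ?S" using that by auto
        then show "y \<in> (*) x ` ?S" by blast
      qed
    qed
    have "prod id ?S = prod id ((*) x ` ?S)" using im by simp
    also have "\<dots> = prod ((*) x) ?S" using prod.reindex[OF inj] by simp
    also have "\<dots> = x ^ card ?S * prod id ?S" by (simp add: prod.distrib)
    finally have "prod id ?S * 1 = prod id ?S * x ^ card ?S" by (simp add: mult.commute)
    moreover have "prod id ?S \<noteq> 0" by (simp add: prod_zero_iff)
    ultimately show ?thesis by simp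
  qed
  have cS: "card ?S = card (UNIV::'a set) - 1" by (simp add: card_Diff_singleton)
  have pos: "card (UNIV::'a set) \<ge> 2"
  proof -
    have "{0::'a, 1} \<subseteq> UNIV" by simp
    then have "card {0::'a,1} \<le> card (UNIV::'a set)" by (rule card_mono[OF finite_UNIV])
    then show ?thesis by simp
  qed
  have "odd (card ?S)" using assms pos cS by simp
  then have "(-1::'a) ^ card ?S = -1" by simp
  moreover have "(-1::'a) ^ card ?S = 1" by (rule fermat) simp
  ultimately have "(-1::'a) = 1" by simp
  then show ?thesis by (metis add.right_inverse)
qed

lemma noroot:
  assumes "irreducible [:\<delta>::'a::field, 1, 1:]"
  shows "x * x + x + \<delta> \<noteq> 0"
proof
  assume h: "x * x + x + \<delta> = 0"
  have "poly [:\<delta>, 1, 1:] x = 0" using h by (simp add: algebra_simps)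
  then have "[:-x, 1:] dvd [:\<delta>, 1, 1:]" using poly_eq_0_iff_dvd by blast
  then obtain c where c: "[:\<delta>, 1, 1:] = [:-x, 1:] * c" by (elim dvdE)
  from irreducibleD[OF assms c] have "is_unit [:-x,1:] \<or> is_unit c" .
  moreover have "\<not> is_unit [:-x, 1::'a:]" by (simp add: is_unit_iff_degree)
  moreover have "c \<noteq> 0" using c by auto
  moreover have "degree c = 1"
  proof -
    have "degree [:\<delta>, 1, 1:] = degree ([:-x,1:] * c)" using c by simp
    also have "\<dots> = degree [:-x,1:] + degree c" using \<open>c \<noteq> 0\<close>
      by (intro degree_mult_eq) auto
    finally have eq: "degree [:\<delta>, 1, 1:] = degree [:-x,1:] + degree c" .
    have "degree [:\<delta>, 1, 1::'a:] = 2" "degree [:-x,1::'a:] = 1" by simp_all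
    then show ?thesis using eq by linarith
  qed
  ultimately show False using is_unit_iff_degree[of c] by simp
qed


lemma vscale_apply: "vscale c x i = c * x i" by (simp add: vscale_def)

abbreviation qq :: "'a itself \<Rightarrow> nat" where "qq _ \<equiv> card (UNIV :: 'a set)"

lemma addl_inj:
  fixes S :: "(nat \<Rightarrow> 'a::field) set"
  assumes "VS.subspace S" "x \<notin> S"
  shows "inj_on (\<lambda>(c,y). vscale c x + y) (UNIV \<times> S)"
proof (rule inj_onI, clarsimp)
  fix c y c' y' assume y: "y \<in> S" "y' \<in> S" and eq: "vscale c x + y = vscale c' x + y'"
  show "c = c' \<and> y = y'"
  proof (cases "c = c'")
    case True then show ?thesis using eq by simp
  next
    case False
    have "vscale (1/(c - c')) (y' - y) \<in> S"
      using assms(1) y by (intro VS.subspace_scale VS.subspace_diff) auto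
    moreover have "vscale (1/(c - c')) (y' - y) = x"
    proof
      fix i
      from eq have "c * x i + y i = c' * x i + y' i" by (metis plus_fun_apply vscale_apply)
      then have h: "(c - c') * x i = y' i - y i" by (simp add: algebra_simps)
      have "x i = ((c - c') * x i) / (c - c')" using False by simp
      also have "\<dots> = (y' i - y i) / (c - c')" using h by simp
      finally show "vscale (1/(c - c')) (y' - y) i = x i" by (simp add: vscale_apply)
    qed
    ultimately show ?thesis using assms(2) by simp
  qed
qed

lemma addl_card:
  fixes S :: "(nat \<Rightarrow> 'a::{field,finite}) set"
  assumes "VS.subspace S" "x \<notin> S" "finite S"
  shows "card ((\<lambda>(c,y). vscale c x + y) ` (UNIV \<times> S)) = card (UNIV::'a set) * card S"
  using card_image[OF addl_inj[OF assms(1,2)]] by (simp add: card_cartesian_product)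

lemma addl_span:
  fixes S :: "(nat \<Rightarrow> 'a::field) set"
  shows "VS.span (insert x S) = (\<lambda>(c,y). vscale c x + y) ` (UNIV \<times> VS.span S)"
proof safe
  fix z assume "z \<in> VS.span (insert x S)"
  then obtain k where k: "z - vscale k x \<in> VS.span S" using VS.span_breakdown_eq by blast
  have "z = vscale k x + (z - vscale k x)" by simp
  then show "z \<in> (\<lambda>(c,y). vscale c x + y) ` (UNIV \<times> VS.span S)" using k
    by (intro rev_image_eqI[of "(k, z - vscale k x)"]) auto
next
  fix c y assume "y \<in> VS.span S"
  then show "vscale c x + y \<in> VS.span (insert x S)"
    by (meson VS.span_add VS.span_base VS.span_mono VS.span_scale insertI1 subsetD subset_insertI)
qed

lemma card_span_indep:
  fixes B :: "(nat \<Rightarrow> 'a::{field,finite}) set"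
  assumes "finite B" "VS.independent B"
  shows "card (VS.span B) = card (UNIV::'a set) ^ card B \<and> finite (VS.span B)"
  using assms
proof (induction B rule: finite_induct)
  case empty then show ?case by (simp add: VS.span_empty)
next
  case (insert x F)
  have xF: "x \<notin> VS.span F" and iF: "VS.independent F"
    using insert.prems insert.hyps VS.independent_insert[of x F] by auto
  have IH: "card (VS.span F) = card (UNIV::'a set) ^ card F" "finite (VS.span F)" using insert.IH iF by auto
  have "card (VS.span (insert x F)) = card (UNIV::'a set) * card (VS.span F)"
    unfolding addl_span by (rule addl_card[OF VS.subspace_span xF IH(2)])
  moreover have "finite (VS.span (insert x F))" unfolding addl_span using IH(2) by simp
  ultimately show ?case using IH insert.hyps by simp
qed

lemma card_subspace:
  fixes W :: "(nat \<Rightarrow> 'a::{field,finite}) set"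
  assumes "VS.subspace W" "finite W"
  shows "card W = card (UNIV::'a set) ^ VS.dim W"
proof -
  obtain B where B: "B \<subseteq> W" "VS.independent B" "W \<subseteq> VS.span B" "card B = VS.dim W"
    using VS.basis_exists by blast
  have "VS.span B = W" using B assms(1) VS.span_minimal by blast
  moreover have "finite B" using B(1) assms(2) finite_subset by blast
  ultimately show ?thesis using card_span_indep[OF _ B(2)] B(4) by auto
qed

lemma q_ge2: "card (UNIV::'a::{field,finite} set) \<ge> 2"
proof -
  have "{0::'a, 1} \<subseteq> UNIV" by simp
  then have "card {0::'a,1} \<le> card (UNIV::'a set)" by (rule card_mono[OF finite_UNIV])
  then show ?thesis by simp
qed

lemma dim_iff_card:
  fixes W :: "(nat \<Rightarrow> 'a::{field,finite}) set"
  assumes "VS.subspace W" "finite W"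
  shows "VS.dim W = n \<longleftrightarrow> card W = card (UNIV::'a set) ^ n"
  using card_subspace[OF assms] q_ge2[where 'a='a] power_inject_exp[of "card (UNIV::'a set)"]
  by (metis Suc_1 Suc_le_lessD)

lemma subspace_psubset:
  fixes S L :: "(nat \<Rightarrow> 'a::{field,finite}) set"
  assumes "VS.subspace S" "VS.subspace L" "S \<subseteq> L" "S \<noteq> L" "finite L"
  shows "card (UNIV::'a set) * card S \<le> card L"
proof -
  obtain x where x: "x \<in> L" "x \<notin> S" using assms(3,4) by blast
  have fS: "finite S" using assms(3,5) finite_subset by blast
  have "(\<lambda>(c,y). vscale c x + y) ` (UNIV \<times> S) \<subseteq> L"
    using assms(2,3) x(1) by (auto intro!: VS.subspace_add VS.subspace_scale)
  then have "card ((\<lambda>(c,y). vscale c x + y) ` (UNIV \<times> S)) \<le> card L" using assms(5) card_mono by blast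
  then show ?thesis using addl_card[OF assms(1) x(2) fS] by simp
qed

lemma hyperplane_card:
  fixes T :: "(nat \<Rightarrow> 'a::{field,finite}) set"
  assumes T: "VS.subspace T" "finite T"
    and add: "\<And>x y. x \<in> T \<Longrightarrow> y \<in> T \<Longrightarrow> \<phi> (x + y) = \<phi> x + \<phi> y"
    and sc: "\<And>c x. x \<in> T \<Longrightarrow> \<phi> (vscale c x) = c * \<phi> x"
    and t0: "t0 \<in> T" "\<phi> t0 \<noteq> 0"
  shows "card T = card (UNIV::'a set) * card {x\<in>T. \<phi> x = 0}"
    and "card {x\<in>T. \<phi> x = a} = card {x\<in>T. \<phi> x = 0}"
proof -
  define t where "t = vscale (1 / \<phi> t0) t0"
  have tT: "t \<in> T" unfolding t_def using T t0 VS.subspace_scale by blast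
  have pt: "\<phi> t = 1" unfolding t_def using sc[OF t0(1)] t0(2) by simp
  define K where "K = {x\<in>T. \<phi> x = 0}"
  have Ksub: "VS.subspace K" unfolding K_def VS.subspace_def
  proof (intro conjI ballI allI)
    have "vscale 0 (0::nat\<Rightarrow>'a) = 0" by (simp add: vscale_def fun_eq_iff)
    then show "0 \<in> {x \<in> T. \<phi> x = 0}" using T(1) sc[of 0 0] by (auto simp: VS.subspace_0)
  qed (use add sc T(1) in \<open>auto intro: VS.subspace_add VS.subspace_scale\<close>)
  have tK: "t \<notin> K" using pt by (simp add: K_def)
  have fK: "finite K" using T(2) by (simp add: K_def)
  have mdiff: "\<phi> (x - y) = \<phi> x - \<phi> y" if "x \<in> T" "y \<in> T" for x y
  proof -
    have "x - y \<in> T" using T(1) that VS.subspace_diff by blast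
    then have "\<phi> x = \<phi> (x - y) + \<phi> y" using add[of "x - y" y] that by simp
    then show ?thesis by simp
  qed
  have "T = (\<lambda>(c,y). vscale c t + y) ` (UNIV \<times> K)"
  proof safe
    fix x assume x: "x \<in> T"
    have stT: "vscale (\<phi> x) t \<in> T" using tT T(1) VS.subspace_scale by blast
    have "x - vscale (\<phi> x) t \<in> K" unfolding K_def
      using mdiff[OF x stT] sc[OF tT] pt x T(1) stT VS.subspace_diff by auto
    moreover have "x = vscale (\<phi> x) t + (x - vscale (\<phi> x) t)" by simp
    ultimately show "x \<in> (\<lambda>(c,y). vscale c t + y) ` (UNIV \<times> K)"
      by (intro rev_image_eqI[of "(\<phi> x, x - vscale (\<phi> x) t)"]) auto
  next
    fix c y assume "y \<in> K"
    then show "vscale c t + y \<in> T" using tT T(1) unfolding K_def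
      by (auto intro: VS.subspace_add VS.subspace_scale)
  qed
  then show "card T = card (UNIV::'a set) * card {x\<in>T. \<phi> x = 0}"
    using addl_card[OF Ksub tK fK] K_def by simp
  have inj: "inj_on (\<lambda>y. vscale a t + y) K" by (auto simp: inj_on_def)
  have "{x\<in>T. \<phi> x = a} = (\<lambda>y. vscale a t + y) ` K"
  proof -
    have A: "x \<in> (\<lambda>y. vscale a t + y) ` K" if x: "x \<in> T" "\<phi> x = a" for x
    proof -
      have stT: "vscale a t \<in> T" using tT T(1) VS.subspace_scale by blast
      have "x - vscale a t \<in> K" unfolding K_def
        using mdiff[OF x(1) stT] sc[OF tT] pt x T(1) stT VS.subspace_diff by auto
      then show ?thesis by (rule rev_image_eqI) simp
    qed
    have B: "vscale a t + y \<in> T \<and> \<phi> (vscale a t + y) = a" if "y \<in> K" for y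
    proof -
      have st: "vscale a t \<in> T" using tT T(1) VS.subspace_scale by blast
      have y: "y \<in> T" "\<phi> y = 0" using that K_def by auto
      show ?thesis using add[OF st y(1)] sc[OF tT] pt y T(1) st VS.subspace_add by auto
    qed
    show ?thesis using A B by blast
  qed
  then show "card {x\<in>T. \<phi> x = a} = card {x\<in>T. \<phi> x = 0}"
    using card_image[OF inj] K_def by simp
qed


lemma card_supp:
  assumes "finite S"
  shows "card {x::nat\<Rightarrow>'a::{zero,finite}. \<forall>i. i \<notin> S \<longrightarrow> x i = 0} = card (UNIV::'a set) ^ card S
       \<and> finite {x::nat\<Rightarrow>'a::{zero,finite}. \<forall>i. i \<notin> S \<longrightarrow> x i = 0}"
proof -
  let ?A = "{x::nat\<Rightarrow>'a. \<forall>i. i \<notin> S \<longrightarrow> x i = 0}"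
  have bij: "bij_betw (\<lambda>x. restrict x S) ?A (PiE S (\<lambda>_. UNIV))"
  proof (rule bij_betw_byWitness[where f'="\<lambda>g i. if i \<in> S then g i else (0::'a)"])
    show "(\<lambda>x. restrict x S) ` ?A \<subseteq> PiE S (\<lambda>_. UNIV)" by auto
    show "(\<lambda>g i. if i \<in> S then g i else 0) ` PiE S (\<lambda>_. UNIV) \<subseteq> ?A" by auto
    show "\<forall>x\<in>?A. (\<lambda>i. if i \<in> S then restrict x S i else 0) = x"
      by (auto simp: fun_eq_iff)
    show "\<forall>y\<in>PiE S (\<lambda>_. UNIV). restrict (\<lambda>i. if i \<in> S then y i else (0::'a)) S = y"
      by (auto simp: fun_eq_iff PiE_def extensional_def)
  qed
  have "card (PiE S (\<lambda>_. UNIV) :: (nat \<Rightarrow> 'a) set) = card (UNIV::'a set) ^ card S"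
    using assms by (simp add: card_PiE)
  moreover have "finite (PiE S (\<lambda>_. UNIV) :: (nat \<Rightarrow> 'a) set)" using assms by (simp add: finite_PiE)
  ultimately show ?thesis using bij_betw_same_card[OF bij] bij_betw_finite[OF bij] by simp
qed

lemma finite_coordspace: "finite (coordspace N :: (nat \<Rightarrow> 'a::{zero,finite}) set)"
  using card_supp[of "{1..N}", where 'a='a] by (simp add: coordspace_def)

lemma sum_B0_split:
  fixes g :: "nat \<Rightarrow> 'a::comm_monoid_add"
  shows "(\<Sum>i=1..2*n+2. g i) = g 1 + g (2*n+2) + (\<Sum>i=2..n+1. g i) + (\<Sum>i=2..n+1. g (2*n+3-i))"
proof -
  have eq: "{1..2*n+2} = insert 1 (insert (2*n+2) ({2..n+1} \<union> {n+2..2*n+1}))" by auto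
  have r: "(\<Sum>i=n+2..2*n+1. g i) = (\<Sum>i=2..n+1. g (2*n+3-i))"
    by (rule sum.reindex_bij_witness[where i="\<lambda>j. 2*n+3-j" and j="\<lambda>i. 2*n+3-i"]) auto
  let ?X = "{2..n+1} \<union> {n+2..2*n+1}"
  have "(\<Sum>i=1..2*n+2. g i) = g 1 + sum g (insert (2*n+2) ?X)"
    unfolding eq by (rule sum.insert) auto
  also have "sum g (insert (2*n+2) ?X) = g (2*n+2) + sum g ?X" by (rule sum.insert) auto
  also have "sum g ?X = (\<Sum>i=2..n+1. g i) + (\<Sum>i=n+2..2*n+1. g i)" by (rule sum.union_disjoint) auto
  finally have "(\<Sum>i=1..2*n+2. g i) = g 1 + (g (2*n+2) + ((\<Sum>i=2..n+1. g i) + (\<Sum>i=n+2..2*n+1. g i)))" .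
  then show ?thesis using r by (simp add: add.assoc)
qed

definition unitv :: "nat \<Rightarrow> nat \<Rightarrow> 'a::{zero,one}" where "unitv k = (\<lambda>i. if i = k then 1 else 0)"

locale qsetup =
  fixes \<delta> \<mu> :: "'a::{field,finite}"
  assumes two: "(1::'a) + 1 = 0" and noroot: "\<And>x. x * x + x + \<delta> \<noteq> 0" and mu: "\<mu> \<noteq> 0"
begin

lemma two': "(2::'a) = 0" using two by (metis one_add_one)
lemma dbl[simp]: "(z::'a) + z = 0" using two by (metis distrib_left mult.right_neutral mult_zero_right)
lemma minus_eq[simp]: "- (z::'a) = z" using dbl by (metis add_eq_0_iff)
lemma diff_eq: "(a::'a) - b = a + b" by (metis minus_eq diff_conv_add_uminus)

lemma aniso: "a * a + a * b + \<delta> * (b * b) = 0 \<Longrightarrow> a = (0::'a) \<and> b = 0"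
proof (cases "b = 0")
  case True then show "a * a + a * b + \<delta> * (b * b) = 0 \<Longrightarrow> ?thesis" by simp
next
  case False
  assume h: "a * a + a * b + \<delta> * (b * b) = 0"
  have "(a/b) * (a/b) + a/b + \<delta> = (a * a + a * b + \<delta> * (b * b)) / (b * b)"
    using False by (simp add: field_simps)
  then have "(a/b) * (a/b) + a/b + \<delta> = 0" using h by simp
  then show ?thesis using noroot by blast
qed

abbreviation Q where "Q n \<equiv> Qform n \<delta> \<mu>"
definition Cf :: "nat \<Rightarrow> (nat \<Rightarrow> 'a) \<Rightarrow> (nat \<Rightarrow> 'a) \<Rightarrow> 'a" where
  "Cf n x y = x (2*n) * y (2*n+1) + x (2*n+1) * y (2*n)"
definition Pol where "Pol n x y = B0 n x y + \<mu> * Cf n x y"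

definition SS :: "nat \<Rightarrow> (nat \<Rightarrow> 'a) \<Rightarrow> (nat \<Rightarrow> 'a) \<Rightarrow> 'a" where
  "SS n x y = (\<Sum>i=2..n+1. x i * y (2*n+3-i))"

lemma B0_split: "B0 n x y = x 1 * y (2*n+2) + x (2*n+2) * y 1 + SS n x y + SS n y x"
  unfolding B0_def SS_def sum_B0_split by (simp add: mult.commute add_ac)

lemma SS_add: "SS n (x + x') y = SS n x y + SS n x' y" "SS n x (y + y') = SS n x y + SS n x y'"
  by (simp_all add: SS_def sum.distrib algebra_simps)

lemma Q_eq: "Q n x = x 1 ^ 2 + x 1 * x (2*n+2) + \<delta> * x (2*n+2) ^ 2 + SS n x x
     + \<mu> * (x (2*n) ^ 2 + x (2*n) * x (2*n+1) + \<delta> * x (2*n+1) ^ 2)"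
  by (simp add: Qform_def SS_def)

lemma Q_add: "Q n (x + y) = Q n x + Q n y + Pol n x y"
proof -
  have "Q n (x + y) = Q n x + Q n y + Pol n x y + 2 * (x 1 * y 1 + \<delta> * (x (2*n+2) * y (2*n+2))
      + \<mu> * (x (2*n) * y (2*n) + \<delta> * (x (2*n+1) * y (2*n+1))))"
    unfolding Q_eq Pol_def B0_split Cf_def SS_add by (simp add: algebra_simps power2_eq_square)
  then show ?thesis by (simp add: two')
qed

lemma SS_scale: "SS n (vscale c x) y = c * SS n x y" "SS n x (vscale c y) = c * SS n x y"
  by (simp_all add: SS_def sum_distrib_left vscale_apply algebra_simps)

lemma Q_scale: "Q n (vscale c x) = c^2 * Q n x"
  unfolding Q_eq SS_scale by (simp add: vscale_apply algebra_simps power2_eq_square)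

lemma Q_zero[simp]: "Q n 0 = 0" by (simp add: Q_eq SS_def)

lemma B0_add: "B0 n (x + x') y = B0 n x y + B0 n x' y" "B0 n x (y + y') = B0 n x y + B0 n x y'"
  by (simp_all add: B0_def sum.distrib algebra_simps)
lemma B0_scale: "B0 n (vscale c x) y = c * B0 n x y" "B0 n x (vscale c y) = c * B0 n x y"
  by (simp_all add: B0_def sum_distrib_left vscale_apply algebra_simps)
lemma B0_sym: "B0 n x y = B0 n y (x::nat\<Rightarrow>'a)"
  using B0_split[of n x y] B0_split[of n y x] by (simp add: mult.commute add_ac)
lemma Cf_add: "Cf n (x + x') y = Cf n x y + Cf n x' y" "Cf n x (y + y') = Cf n x y + Cf n x y'"
  by (simp_all add: Cf_def algebra_simps)
lemma Cf_scale: "Cf n (vscale c x) y = c * Cf n x y" "Cf n x (vscale c y) = c * Cf n x y"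
  by (simp_all add: Cf_def vscale_apply algebra_simps)
lemma Cf_sym: "Cf n x y = Cf n y x" by (simp add: Cf_def mult.commute add.commute)
lemma Cf_self[simp]: "Cf n x x = 0" by (simp add: Cf_def mult.commute)
lemma Pol_add: "Pol n (x + x') y = Pol n x y + Pol n x' y" "Pol n x (y + y') = Pol n x y + Pol n x y'"
  by (simp_all add: Pol_def B0_add Cf_add algebra_simps)
lemma Pol_scale: "Pol n (vscale c x) y = c * Pol n x y" "Pol n x (vscale c y) = c * Pol n x y"
  by (simp_all add: Pol_def B0_scale Cf_scale algebra_simps)
lemma Pol_sym: "Pol n x y = Pol n y x" by (simp add: Pol_def B0_sym Cf_sym)
lemma Pol_self[simp]: "Pol n x x = 0"
proof -
  have "Q n (x + x) = 0"
  proof -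
    have "x + x = vscale 0 x" by (simp add: fun_eq_iff vscale_apply two')
    then show ?thesis by (simp add: Q_scale)
  qed
  then show ?thesis using Q_add[of n x x] by simp
qed
lemma B0_unit: "k \<in> {1..2*n+2} \<Longrightarrow> B0 n (unitv k) x = x (2*n+3-k)"
proof -
  assume k: "k \<in> {1..2*n+2}"
  have "B0 n (unitv k) x = (\<Sum>i=1..2*n+2. if i = k then x (2*n+3-i) else 0)"
    unfolding B0_def unitv_def by (rule sum.cong) auto
  then show ?thesis using k by simp
qed

end


context qsetup begin


definition K0 :: "nat \<Rightarrow> (nat \<Rightarrow> 'a) set" where "K0 n = {x. x (2*n) = 0 \<and> x (2*n+1) = 0}"
definition Z :: "nat \<Rightarrow> bool \<Rightarrow> (nat \<Rightarrow> 'a) set" where "Z n b = (if b then K0 n else UNIV)"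

definition TS :: "nat \<Rightarrow> (nat \<Rightarrow> 'a) set \<Rightarrow> bool" where
  "TS n W \<longleftrightarrow> W \<subseteq> coordspace (2*n+2) \<and> VS.subspace W \<and> (\<forall>x\<in>W. Q n x = 0) \<and> (\<forall>x\<in>W. \<forall>y\<in>W. Cf n x y = 0)"

definition GS :: "nat \<Rightarrow> bool \<Rightarrow> (nat \<Rightarrow> 'a) set set" where
  "GS n b = {W. TS n W \<and> card W = card (UNIV::'a set) ^ n \<and> W \<subseteq> Z n b}"

definition Vp :: "nat \<Rightarrow> (nat \<Rightarrow> 'a) set" where
  "Vp n = {x. \<forall>i. i \<notin> {1..2*n+2} - {n+1, n+2} \<longrightarrow> x i = 0}"

definition Rm :: "nat \<Rightarrow> (nat \<Rightarrow> 'a) \<Rightarrow> (nat \<Rightarrow> 'a)" where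
  "Rm n x = (\<lambda>i. if i \<le> n then x i else x (i+2))"
definition Jm :: "nat \<Rightarrow> (nat \<Rightarrow> 'a) \<Rightarrow> (nat \<Rightarrow> 'a)" where
  "Jm n y = (\<lambda>i. if i \<le> n then y i else if i \<le> n+2 then 0 else y (i-2))"

lemma Rm_lin: "Rm n (x + y) = Rm n x + Rm n y" "Rm n (vscale c x) = vscale c (Rm n x)" "Rm n 0 = 0"
  by (auto simp: Rm_def fun_eq_iff vscale_apply)
lemma Jm_lin: "Jm n (x + y) = Jm n x + Jm n y" "Jm n (vscale c x) = vscale c (Jm n x)" "Jm n 0 = 0"
  by (auto simp: Jm_def fun_eq_iff vscale_apply)

lemma Rm_in: "x \<in> Vp (Suc m) \<Longrightarrow> Rm (Suc m) x \<in> coordspace (2*m+2)"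
  by (auto simp: Vp_def coordspace_def Rm_def)
lemma Jm_in: "y \<in> coordspace (2*m+2) \<Longrightarrow> Jm (Suc m) y \<in> Vp (Suc m)"
proof -
  assume y: "y \<in> coordspace (2*m+2)"
  have "Jm (Suc m) y i = 0" if i: "i \<notin> {1..2*Suc m+2} - {Suc m+1, Suc m+2}" for i
  proof (cases "i \<le> Suc m")
    case True then have "i = 0" using i by auto
    then show ?thesis using y True by (simp add: Jm_def coordspace_def)
  next
    case False
    show ?thesis
    proof (cases "i \<le> Suc m + 2")
      case True then show ?thesis using False by (simp add: Jm_def)
    next
      case F2: False
      then have "i - 2 \<notin> {1..2*m+2}" using i by auto
      then show ?thesis using False F2 y by (simp add: Jm_def coordspace_def)
    qed
  qed
  then show ?thesis by (simp add: Vp_def)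
qed
lemma Jm_Rm: "x \<in> Vp n \<Longrightarrow> Jm n (Rm n x) = x"
proof
  fix i assume x: "x \<in> Vp n"
  show "Jm n (Rm n x) i = x i"
  proof (cases "i \<le> n")
    case True then show ?thesis by (simp add: Jm_def Rm_def)
  next
    case False
    show ?thesis
    proof (cases "i \<le> n + 2")
      case True
      then have "i \<in> {n+1, n+2}" using False by auto
      then have "x i = 0" using x by (auto simp: Vp_def)
      then show ?thesis using False True by (simp add: Jm_def)
    next
      case F2: False
      then have "Suc (Suc (i - 2)) = i" by simp
      then show ?thesis using False F2 by (simp add: Jm_def Rm_def)
    qed
  qed
qed
lemma Rm_Jm: "Rm n (Jm n y) = y"
  by (auto simp: Jm_def Rm_def fun_eq_iff)

lemma Q_Rm:
  assumes "x \<in> Vp (Suc m)" "m \<ge> 2"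
  shows "Q m (Rm (Suc m) x) = Q (Suc m) x"
proof -
  have x0: "x (m+2) = 0" using assms(1) by (auto simp: Vp_def)
  have s: "SS (m+1) x x = SS m (Rm (m+1) x) (Rm (m+1) x)"
  proof -
    have "SS (m+1) x x = (\<Sum>i=2..m+1. x i * x (2*(m+1)+3-i)) + x (m+2) * x (2*(m+1)+3-(m+2))"
      unfolding SS_def by (simp add: add.commute)
    also have "\<dots> = (\<Sum>i=2..m+1. x i * x (2*(m+1)+3-i))" using x0 by simp
    also have "\<dots> = SS m (Rm (m+1) x) (Rm (m+1) x)"
      unfolding SS_def by (rule sum.cong) (auto simp: Rm_def intro!: arg_cong[where f=x])
    finally show ?thesis .
  qed
  have e1: "Rm (m+1) x 1 = x 1" "Rm (m+1) x (2*m+2) = x (2*(m+1)+2)"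
     "Rm (m+1) x (2*m) = x (2*(m+1))" "Rm (m+1) x (2*m+1) = x (2*(m+1)+1)"
    using assms(2) by (auto simp: Rm_def)
  have "Q m (Rm (m+1) x) = Q (m+1) x" unfolding Q_eq s e1 ..
  then show ?thesis by simp
qed

lemma Cf_Rm: "m \<ge> 2 \<Longrightarrow> Cf m (Rm (Suc m) x) (Rm (Suc m) y) = Cf (Suc m) x y"
  by (simp add: Cf_def Rm_def)

lemma K0_Rm: "m \<ge> 2 \<Longrightarrow> Rm (Suc m) x \<in> K0 m \<longleftrightarrow> x \<in> K0 (Suc m)"
  by (simp add: K0_def Rm_def)

lemma Z_Rm: "m \<ge> 2 \<Longrightarrow> Rm (Suc m) x \<in> Z m b \<longleftrightarrow> x \<in> Z (Suc m) b"
  by (simp add: Z_def K0_Rm)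

end


lemma lin_image_subspace:
  assumes "\<And>x y. f (x + y) = f x + f y" "\<And>c x. f (vscale c x) = vscale c (f x)" "f 0 = 0"
    and "VS.subspace S"
  shows "VS.subspace (f ` (S :: (nat \<Rightarrow> 'a::field) set))"
proof -
  have "0 \<in> f ` S" using assms(3,4) VS.subspace_0 by (metis image_eqI)
  moreover have "a + b \<in> f ` S" if ab: "a \<in> f ` S" "b \<in> f ` S" for a b
  proof -
    obtain x y where "x \<in> S" "y \<in> S" "a = f x" "b = f y" using ab by blast
    then show ?thesis using assms(1,4) VS.subspace_add by (metis image_eqI)
  qed
  moreover have "vscale c a \<in> f ` S" if ab: "a \<in> f ` S" for a c
  proof -
    obtain x where "x \<in> S" "a = f x" using ab by blast
    then show ?thesis using assms(2,4) VS.subspace_scale by (metis image_eqI)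
  qed
  ultimately show ?thesis by (simp add: VS.subspace_def)
qed

lemma subspace_ker:
  assumes "VS.subspace (W :: (nat \<Rightarrow> 'a::field) set)"
  shows "VS.subspace {x\<in>W. x j = 0}"
  using assms unfolding VS.subspace_def by (auto simp: vscale_apply)

context qsetup begin

lemma Pol_TS: "TS n W \<Longrightarrow> x \<in> W \<Longrightarrow> y \<in> W \<Longrightarrow> Pol n x y = 0"
proof -
  assume T: "TS n W" and xy: "x \<in> W" "y \<in> W"
  then have "x + y \<in> W" unfolding TS_def using VS.subspace_add by blast
  then show ?thesis using T xy Q_add[of n x y] unfolding TS_def by simp
qed

lemma TS_sub: "TS n W \<Longrightarrow> VS.subspace V \<Longrightarrow> V \<subseteq> W \<Longrightarrow> TS n V"
  unfolding TS_def by blast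

lemma finite_TS: "TS n W \<Longrightarrow> finite W"
  unfolding TS_def using finite_coordspace finite_subset by blast

lemma unit_coord: "k \<in> {1..N} \<Longrightarrow> unitv k \<in> coordspace N"
  by (auto simp: unitv_def coordspace_def)

lemma Cf_unit: "k \<noteq> 2*n \<Longrightarrow> k \<noteq> 2*n+1 \<Longrightarrow> Cf n (unitv k) x = 0"
  by (simp add: Cf_def unitv_def)

lemma Pol_unit: "k \<in> {1..2*n+2} \<Longrightarrow> k \<noteq> 2*n \<Longrightarrow> k \<noteq> 2*n+1 \<Longrightarrow> Pol n (unitv k) x = x (2*n+3-k)"
  by (simp add: Pol_def Cf_unit B0_unit)

lemma Q_unit_mid: "n \<ge> 3 \<Longrightarrow> Q n (unitv (n+1)) = 0"
proof -
  assume n: "n \<ge> 3"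
  have "SS n (unitv (n+1)) (unitv (n+1)) = 0" unfolding SS_def by (rule sum.neutral) (auto simp: unitv_def)
  then show ?thesis unfolding Q_eq using n by (simp add: unitv_def)
qed

lemma Q_unit_mid2: "n \<ge> 3 \<Longrightarrow> Q n (unitv (n+2)) = 0"
proof -
  assume n: "n \<ge> 3"
  have "SS n (unitv (n+2)) (unitv (n+2)) = 0" unfolding SS_def by (rule sum.neutral) (auto simp: unitv_def)
  then show ?thesis unfolding Q_eq using n by (simp add: unitv_def)
qed

lemma kill_decomp: "x = x(k := 0) + vscale (x k) (unitv k)"
  by (auto simp: fun_eq_iff vscale_apply unitv_def)

lemma Q_kill:
  assumes "n \<ge> 3"
  shows "Q n x = Q n (x(n+1 := 0)) + x (n+1) * x (n+2)"
proof -
  have "Q n x = Q n (x(n+1 := 0) + vscale (x (n+1)) (unitv (n+1)))"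
    using kill_decomp[of x "n+1"] by simp
  also have "\<dots> = Q n (x(n+1 := 0)) + x (n+1) * Pol n (x(n+1 := 0)) (unitv (n+1))"
    using assms Q_unit_mid[OF assms] by (simp add: Q_add Q_scale Pol_scale)
  also have "Pol n (x(n+1 := 0)) (unitv (n+1)) = x (n+2)"
    using assms by (subst Pol_sym) (simp add: Pol_unit)
  finally show ?thesis .
qed

lemma Cf_kill: "n \<ge> 3 \<Longrightarrow> Cf n (x(n+1 := 0)) y = Cf n x y"
  by (simp add: Cf_def)

definition L2 :: "(nat \<Rightarrow> 'a) set" where "L2 = {x. \<forall>i. i \<notin> {2,3} \<longrightarrow> x i = 0}"

lemma L2_card: "card L2 = card (UNIV::'a set) ^ 2" and L2_fin: "finite L2"
  using card_supp[of "{2,3::nat}", where 'a='a] unfolding L2_def by (simp_all add: power2_eq_square)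

lemma L2_sub: "VS.subspace L2"
  unfolding VS.subspace_def L2_def by (auto simp: vscale_apply)

lemma SS2: "SS 2 x y = x 2 * y 5 + x 3 * y 4"
proof -
  have "{2..2+1::nat} = {2,3}" by auto
  then show ?thesis unfolding SS_def by simp
qed

lemma Q2: "Q 2 x = x 1 ^ 2 + x 1 * x 6 + \<delta> * x 6 ^ 2 + x 2 * x 5 + x 3 * x 4
     + \<mu> * (x 4 ^ 2 + x 4 * x 5 + \<delta> * x 5 ^ 2)"
  unfolding Q_eq SS2 by simp

lemma sing_K0:
  assumes "x \<in> coordspace 6" "x 4 = 0" "x 5 = 0" "Q 2 x = 0"
  shows "x \<in> L2"
proof -
  have "x 1 * x 1 + x 1 * x 6 + \<delta> * (x 6 * x 6) = 0" using assms(2-4) unfolding Q2 by (simp add: power2_eq_square)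
  then have x16: "x 1 = 0" "x 6 = 0" using aniso by blast+
  have "x i = 0" if i: "i \<notin> {2,3}" for i
  proof (cases "i \<in> {1,4,5,6}")
    case True then show ?thesis using x16 assms(2,3) by auto
  next
    case False then show ?thesis using assms(1) i unfolding coordspace_def by auto
  qed
  then show ?thesis unfolding L2_def by blast
qed

lemma Witt2: "TS 2 W \<Longrightarrow> card W \<le> card (UNIV::'a set) ^ 2"
proof -
  assume W: "TS 2 W"
  have subW: "VS.subspace W" using W by (auto simp: TS_def)
  have fW: "finite W" using W by (rule finite_TS)
  define WK where "WK = {x\<in>W. x 4 = 0 \<and> x 5 = 0}"
  have WKsub: "VS.subspace WK" unfolding WK_def using subW unfolding VS.subspace_def by (auto simp: vscale_apply)
  have WKL: "WK \<subseteq> L2" using W sing_K0 unfolding WK_def TS_def by auto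
  show ?thesis
  proof (cases "\<forall>x\<in>W. x 4 = 0 \<and> x 5 = 0")
    case True
    then have "W \<subseteq> L2" using WKL unfolding WK_def by auto
    then show ?thesis using L2_card L2_fin card_mono by metis
  next
    case False
    then obtain w where w: "w \<in> W" "w 4 \<noteq> 0 \<or> w 5 \<noteq> 0" by blast
    define j where "j = (if w 4 \<noteq> 0 then 4 else (5::nat))"
    have wj: "w j \<noteq> 0" using w by (auto simp: j_def)
    have linc: "\<And>x y. x \<in> W \<Longrightarrow> y \<in> W \<Longrightarrow> (x + y) j = x j + y j"
      "\<And>c x. x \<in> W \<Longrightarrow> (vscale c x) j = c * x j" by (simp_all add: vscale_apply)
    have cW: "card W = card (UNIV::'a set) * card {t\<in>W. t j = 0}" using hyperplane_card(1)[OF subW fW linc w(1) wj] .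
    have eqK: "{t\<in>W. t j = 0} = WK"
    proof -
      have "t 4 = 0 \<and> t 5 = 0" if t: "t \<in> W" "t j = 0" for t
      proof -
        have "Cf 2 w t = 0" using W w(1) t(1) by (auto simp: TS_def)
        then have c: "w 4 * t 5 + w 5 * t 4 = 0" by (simp add: Cf_def)
        show ?thesis
        proof (cases "w 4 \<noteq> 0")
          case True then have "t 4 = 0" using t by (simp add: j_def)
          then show ?thesis using c True by simp
        next
          case False then have "t 5 = 0" "w 5 \<noteq> 0" using t w by (auto simp: j_def)
          then show ?thesis using c False by simp
        qed
      qed
      moreover have "t j = 0" if "t \<in> WK" for t using that by (auto simp: WK_def j_def)
      ultimately show ?thesis unfolding WK_def by auto
    qed
    have neq: "WK \<noteq> L2"
    proof
      assume "WK = L2"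
      then have u: "unitv 2 \<in> W" "unitv 3 \<in> W" unfolding WK_def L2_def by (auto simp: unitv_def)
      have "Pol 2 (unitv 2) w = 0" "Pol 2 (unitv 3) w = 0" using Pol_TS[OF W] u w(1) by auto
      moreover have "Pol 2 (unitv 2) w = w 5" "Pol 2 (unitv 3) w = w 4"
        by (simp_all add: Pol_unit)
      ultimately show False using w(2) by simp
    qed
    have "card (UNIV::'a set) * card WK \<le> card (UNIV::'a set) ^ 2" using subspace_psubset[OF WKsub L2_sub WKL neq L2_fin] L2_card by simp
    then have "card WK \<le> card (UNIV::'a set)" using q_ge2[where 'a='a] by (simp add: power2_eq_square)
    then show ?thesis using cW eqK by (simp add: power2_eq_square)
  qed
qed

lemma TS_Rm:
  assumes m: "m \<ge> 2" and U: "U \<subseteq> Vp (Suc m)" "VS.subspace U" "\<forall>x\<in>U. Q (Suc m) x = 0"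
    "\<forall>x\<in>U. \<forall>y\<in>U. Cf (Suc m) x y = 0"
  shows "TS m (Rm (Suc m) ` U) \<and> card (Rm (Suc m) ` U) = card U"
proof -
  have inj: "inj_on (Rm (Suc m)) U"
    by (rule inj_on_inverseI[where g="Jm (Suc m)"]) (use U Jm_Rm in blast)
  have "TS m (Rm (Suc m) ` U)" unfolding TS_def
  proof (intro conjI)
    show "Rm (Suc m) ` U \<subseteq> coordspace (2 * m + 2)" using U(1) Rm_in by blast
    show "VS.subspace (Rm (Suc m) ` U)" by (rule lin_image_subspace[OF Rm_lin U(2)])
    show "\<forall>x\<in>Rm (Suc m) ` U. Q m x = 0" using U(1,3) Q_Rm[OF _ m] by auto
    show "\<forall>x\<in>Rm (Suc m) ` U. \<forall>y\<in>Rm (Suc m) ` U. Cf m x y = 0" using U(4) Cf_Rm[OF m] by auto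
  qed
  then show ?thesis using card_image[OF inj] by simp
qed

lemma kill_lin: "(x + y)(k := 0) = x(k := 0) + y(k := (0::'a))" "(vscale c x)(k := 0) = vscale c (x(k := 0))"
  "(0::nat\<Rightarrow>'a)(k := 0) = 0"
  by (auto simp: fun_eq_iff vscale_apply)

lemma kill_inj:
  assumes "VS.subspace W" "unitv k \<notin> W"
  shows "inj_on (\<lambda>x. x(k := (0::'a))) W"
proof (rule inj_onI)
  fix x y assume xy: "x \<in> W" "y \<in> W" "x(k := 0) = y(k := 0)"
  have d: "x - y = vscale (x k - y k) (unitv k)"
  proof
    fix i show "(x - y) i = vscale (x k - y k) (unitv k) i"
      using fun_cong[OF xy(3), of i] by (auto simp: vscale_apply unitv_def)
  qed
  have "x - y \<in> W" using xy assms(1) VS.subspace_diff by blast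
  show "x = y"
  proof (cases "x k = y k")
    case True
    then have "x - y = 0" using d by (simp add: fun_eq_iff vscale_apply)
    then show ?thesis by simp
  next
    case False
    have "vscale (1 / (x k - y k)) (x - y) \<in> W" using \<open>x - y \<in> W\<close> assms(1) VS.subspace_scale by blast
    moreover have "vscale (1 / (x k - y k)) (x - y) = unitv k"
      using False unfolding d by (simp add: fun_eq_iff vscale_apply)
    ultimately show ?thesis using assms(2) by simp
  qed
qed

lemma kill_TS:
  assumes m: "m \<ge> 2" and W: "TS (Suc m) W" and sub: "VS.subspace W'" "W' \<subseteq> {x\<in>W. x (m+3) = 0}"
  shows "(\<lambda>x. x(m+2 := 0)) ` W' \<subseteq> Vp (Suc m) \<and> VS.subspace ((\<lambda>x. x(m+2 := 0)) ` W')
     \<and> (\<forall>x\<in>(\<lambda>x. x(m+2 := 0)) ` W'. Q (Suc m) x = 0)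
     \<and> (\<forall>x\<in>(\<lambda>x. x(m+2 := 0)) ` W'. \<forall>y\<in>(\<lambda>x. x(m+2 := 0)) ` W'. Cf (Suc m) x y = 0)"
proof (intro conjI)
  have n3: "Suc m \<ge> 3" using m by simp
  have m3: "m + 3 = Suc (Suc (Suc m))" by simp
  show "(\<lambda>x. x(m+2 := 0)) ` W' \<subseteq> Vp (Suc m)" using sub W unfolding TS_def Vp_def coordspace_def m3 by auto
  show "VS.subspace ((\<lambda>x. x(m+2 := 0)) ` W')" by (rule lin_image_subspace[OF kill_lin sub(1)])
  show "\<forall>x\<in>(\<lambda>x. x(m+2 := 0)) ` W'. Q (Suc m) x = 0"
  proof
    fix x assume "x \<in> (\<lambda>x. x(m+2 := 0)) ` W'"
    then obtain y where y: "y \<in> W'" "x = y(m+2 := 0)" by blast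
    have "Q (Suc m) y = Q (Suc m) (y(Suc m + 1 := 0)) + y (Suc m + 1) * y (Suc m + 2)" by (rule Q_kill[OF n3])
    moreover have "y \<in> W" "y (m+3) = 0" using y sub by auto
    ultimately show "Q (Suc m) x = 0" using y W unfolding TS_def by (simp add: m3)
  qed
  show "\<forall>x\<in>(\<lambda>x. x(m+2 := 0)) ` W'. \<forall>y\<in>(\<lambda>x. x(m+2 := 0)) ` W'. Cf (Suc m) x y = 0"
  proof (intro ballI)
    fix x y assume "x \<in> (\<lambda>x. x(m+2 := 0)) ` W'" "y \<in> (\<lambda>x. x(m+2 := 0)) ` W'"
    then obtain x' y' where xy: "x' \<in> W'" "y' \<in> W'" "x = x'(m+2 := 0)" "y = y'(m+2 := 0)" by blast
    then have "x' \<in> W" "y' \<in> W" using sub by auto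
    then have "Cf (Suc m) x' y' = 0" using W unfolding TS_def by blast
    then show "Cf (Suc m) x y = 0" using xy m by (simp add: Cf_def)
  qed
qed

lemma Witt_step:
  assumes m: "m \<ge> 2" and IH: "\<And>U. TS m U \<Longrightarrow> card U \<le> card (UNIV::'a set) ^ m"
    and W: "TS (Suc m) W"
  shows "card W \<le> card (UNIV::'a set) ^ Suc m"
proof -
  have n3: "Suc m \<ge> 3" using m by simp
  have fW: "finite W" using finite_TS[OF W] .
  have subW: "VS.subspace W" using W by (simp add: TS_def)
  have linc: "\<And>x y. x \<in> W \<Longrightarrow> y \<in> W \<Longrightarrow> (x + y) j = x j + y j"
    "\<And>c x. x \<in> W \<Longrightarrow> (vscale c x) j = c * x j" for j by (simp_all add: vscale_apply)
  have bound: "card U \<le> card (UNIV::'a set) ^ m" if "U \<subseteq> Vp (Suc m)" "VS.subspace U" "\<forall>x\<in>U. Q (Suc m) x = 0"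
    "\<forall>x\<in>U. \<forall>y\<in>U. Cf (Suc m) x y = 0" for U
    using TS_Rm[OF m that] IH by metis
  show ?thesis
  proof (cases "\<forall>x\<in>W. x (m+3) = 0")
    case True
    define W0 where "W0 = {x\<in>W. x (m+2) = 0}"
    have W0: "W0 \<subseteq> Vp (Suc m)" "VS.subspace W0" "\<forall>x\<in>W0. Q (Suc m) x = 0"
      "\<forall>x\<in>W0. \<forall>y\<in>W0. Cf (Suc m) x y = 0"
    proof -
      have m3: "m + 3 = Suc (Suc (Suc m))" by simp
      show "W0 \<subseteq> Vp (Suc m)" "VS.subspace W0" "\<forall>x\<in>W0. Q (Suc m) x = 0"
        "\<forall>x\<in>W0. \<forall>y\<in>W0. Cf (Suc m) x y = 0"
        using W True subspace_ker[OF subW] unfolding W0_def TS_def Vp_def coordspace_def m3 by auto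
    qed
    have c0: "card W0 \<le> card (UNIV::'a set) ^ m" using bound[OF W0] .
    have "card W \<le> card (UNIV::'a set) * card W0"
    proof (cases "\<exists>x\<in>W. x (m+2) \<noteq> 0")
      case True
      then obtain t where "t \<in> W" "t (m+2) \<noteq> 0" by blast
      from hyperplane_card(1)[OF subW fW linc this] show ?thesis unfolding W0_def by simp
    next
      case False
      then have "W0 = W" unfolding W0_def by auto
      then show ?thesis using q_ge2[where 'a='a] by simp
    qed
    then show ?thesis using c0 by (simp add: order_trans)
  next
    case False
    then obtain w where w: "w \<in> W" "w (m+3) \<noteq> 0" by blast
    define Wl where "Wl = {x\<in>W. x (m+3) = 0}"
    have cW: "card W = card (UNIV::'a set) * card Wl"
      using hyperplane_card(1)[OF subW fW linc w] unfolding Wl_def by simp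
    have e: "unitv (m+2) \<notin> W"
    proof
      assume "unitv (m+2) \<in> W"
      then have "Pol (Suc m) (unitv (m+2)) w = 0" using Pol_TS[OF W] w by blast
      moreover have "Pol (Suc m) (unitv (m+2)) w = w (m+3)"
        using Pol_unit[of "m+2" "Suc m" w] m by simp
      ultimately show False using w by simp
    qed
    have sWl: "VS.subspace Wl" unfolding Wl_def by (rule subspace_ker[OF subW])
    have K: "(\<lambda>x. x(m+2 := 0)) ` Wl \<subseteq> Vp (Suc m) \<and> VS.subspace ((\<lambda>x. x(m+2 := 0)) ` Wl)
     \<and> (\<forall>x\<in>(\<lambda>x. x(m+2 := 0)) ` Wl. Q (Suc m) x = 0)
     \<and> (\<forall>x\<in>(\<lambda>x. x(m+2 := 0)) ` Wl. \<forall>y\<in>(\<lambda>x. x(m+2 := 0)) ` Wl. Cf (Suc m) x y = 0)"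
      by (rule kill_TS[OF m W sWl]) (simp add: Wl_def)
    have inj: "inj_on (\<lambda>x. x(m+2 := 0)) Wl"
      using kill_inj[OF subW e] unfolding Wl_def by (rule inj_on_subset) auto
    have "card Wl \<le> card (UNIV::'a set) ^ m" using bound K card_image[OF inj] by metis
    then show ?thesis using cW by simp
  qed
qed

lemma Witt: "n \<ge> 2 \<Longrightarrow> TS n W \<Longrightarrow> card W \<le> card (UNIV::'a set) ^ n"
proof (induction n arbitrary: W rule: nat_induct_at_least)
  case base then show ?case using Witt2 by blast
next
  case (Suc m) then show ?case using Witt_step by blast
qed

end


lemma addl_subspace:
  assumes "VS.subspace (U :: (nat \<Rightarrow> 'a::field) set)"
  shows "VS.subspace ((\<lambda>(c,u). vscale c e + u) ` (UNIV \<times> U))"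
proof -
  have z: "0 \<in> (\<lambda>(c,u). vscale c e + u) ` (UNIV \<times> U)"
    using assms VS.subspace_0 by (intro rev_image_eqI[of "(0, 0)"]) (auto simp: vscale_def fun_eq_iff)
  have a: "x + y \<in> (\<lambda>(c,u). vscale c e + u) ` (UNIV \<times> U)"
    if xy: "x \<in> (\<lambda>(c,u). vscale c e + u) ` (UNIV \<times> U)" "y \<in> (\<lambda>(c,u). vscale c e + u) ` (UNIV \<times> U)" for x y
  proof -
    obtain c u where h1: "u \<in> U" "x = vscale c e + u" using xy(1) by auto
    obtain c' u' where h2: "u' \<in> U" "y = vscale c' e + u'" using xy(2) by auto
    note h = h1(1) h2(1) h1(2) h2(2)
    then have "x + y = vscale (c + c') e + (u + u')" by (simp add: fun_eq_iff vscale_apply algebra_simps)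
    moreover have "u + u' \<in> U" using h assms VS.subspace_add by blast
    ultimately show ?thesis by (intro rev_image_eqI[of "(c + c', u + u')"]) auto
  qed
  have sc: "vscale a x \<in> (\<lambda>(c,u). vscale c e + u) ` (UNIV \<times> U)"
    if xx: "x \<in> (\<lambda>(c,u). vscale c e + u) ` (UNIV \<times> U)" for x a
  proof -
    obtain c u where h: "u \<in> U" "x = vscale c e + u" using xx by auto
    then have "vscale a x = vscale (a * c) e + vscale a u" by (simp add: fun_eq_iff vscale_apply algebra_simps)
    moreover have "vscale a u \<in> U" using h assms VS.subspace_scale by blast
    ultimately show ?thesis by (intro rev_image_eqI[of "(a * c, vscale a u)"]) auto
  qed
  show ?thesis by (rule VS.subspaceI[OF z a sc])
qed

context qsetup begin

definition GP :: "nat \<Rightarrow> bool \<Rightarrow> (nat \<Rightarrow> 'a) set set" where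
  "GP m b = {U. U \<subseteq> Vp (Suc m) \<and> VS.subspace U \<and> (\<forall>x\<in>U. Q (Suc m) x = 0)
      \<and> (\<forall>x\<in>U. \<forall>y\<in>U. Cf (Suc m) x y = 0) \<and> card U = card (UNIV::'a set) ^ m \<and> U \<subseteq> Z (Suc m) b}"

lemma Z_sub: "VS.subspace (Z n b)"
  unfolding Z_def K0_def VS.subspace_def by (auto simp: vscale_apply)

lemma GP_bij:
  assumes m: "m \<ge> 2"
  shows "bij_betw (\<lambda>U. Rm (Suc m) ` U) (GP m b) (GS m b)"
proof (rule bij_betw_byWitness[where f'="\<lambda>W. Jm (Suc m) ` W"])
  show "\<forall>U\<in>GP m b. Jm (Suc m) ` Rm (Suc m) ` U = U"
  proof
    fix U assume "U \<in> GP m b"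
    then have "U \<subseteq> Vp (Suc m)" by (simp add: GP_def)
    then show "Jm (Suc m) ` Rm (Suc m) ` U = U" using Jm_Rm by (force simp: image_image)
  qed
  show "\<forall>W\<in>GS m b. Rm (Suc m) ` Jm (Suc m) ` W = W" by (simp add: image_image Rm_Jm)
  show "(\<lambda>U. Rm (Suc m) ` U) ` GP m b \<subseteq> GS m b"
  proof
    fix W assume "W \<in> (\<lambda>U. Rm (Suc m) ` U) ` GP m b"
    then obtain U where U: "U \<in> GP m b" "W = Rm (Suc m) ` U" by blast
    have h: "U \<subseteq> Vp (Suc m)" "VS.subspace U" "\<forall>x\<in>U. Q (Suc m) x = 0"
      "\<forall>x\<in>U. \<forall>y\<in>U. Cf (Suc m) x y = 0" "card U = card (UNIV::'a set) ^ m" "U \<subseteq> Z (Suc m) b"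
      using U(1) by (auto simp: GP_def)
    show "W \<in> GS m b" using TS_Rm[OF m h(1-4)] h(5,6) U(2) Z_Rm[OF m] by (auto simp: GS_def)
  qed
  show "(\<lambda>W. Jm (Suc m) ` W) ` GS m b \<subseteq> GP m b"
  proof
    fix U assume "U \<in> (\<lambda>W. Jm (Suc m) ` W) ` GS m b"
    then obtain W where W: "W \<in> GS m b" "U = Jm (Suc m) ` W" by blast
    have h: "W \<subseteq> coordspace (2*m+2)" "VS.subspace W" "\<forall>x\<in>W. Q m x = 0"
      "\<forall>x\<in>W. \<forall>y\<in>W. Cf m x y = 0" "card W = card (UNIV::'a set) ^ m" "W \<subseteq> Z m b"
      using W(1) by (auto simp: GS_def TS_def)
    have inj: "inj_on (Jm (Suc m)) W" by (rule inj_on_inverseI[where g="Rm (Suc m)"]) (simp add: Rm_Jm)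
    have sub: "U \<subseteq> Vp (Suc m)" using h(1) Jm_in W(2) by blast
    have Qj: "Q (Suc m) (Jm (Suc m) y) = Q m y" if "y \<in> W" for y
      using Q_Rm[OF Jm_in[of y m] m] h(1) that by (auto simp: Rm_Jm)
    have Cj: "Cf (Suc m) (Jm (Suc m) x) (Jm (Suc m) y) = Cf m x y" for x y
      using Cf_Rm[OF m, of "Jm (Suc m) x" "Jm (Suc m) y"] by (simp add: Rm_Jm)
    have Zj: "Jm (Suc m) y \<in> Z (Suc m) b \<longleftrightarrow> y \<in> Z m b" for y
      using Z_Rm[OF m, of "Jm (Suc m) y"] by (simp add: Rm_Jm)
    show "U \<in> GP m b" unfolding GP_def
      using sub lin_image_subspace[OF Jm_lin[where n="Suc m"] h(2)] h(3-6) Qj Cj Zj card_image[OF inj] W(2) by auto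
  qed
qed

lemma GP_card: "m \<ge> 2 \<Longrightarrow> card (GP m b) = card (GS m b)"
  using GP_bij bij_betw_same_card by blast

end


context qsetup begin

lemma e_facts:
  assumes m: "m \<ge> 2"
  shows "unitv (m+2) \<in> coordspace (2*Suc m+2)" "Q (Suc m) (unitv (m+2)) = 0"
    "Cf (Suc m) (unitv (m+2)) x = 0" "Pol (Suc m) (unitv (m+2)) x = x (m+3)"
    "Pol (Suc m) x (unitv (m+2)) = x (m+3)" "unitv (m+2) \<in> Z (Suc m) b"
    "unitv (m+2) \<notin> Vp (Suc m)"
proof -
  show "unitv (m+2) \<in> coordspace (2*Suc m+2)" by (rule unit_coord) simp
  show "Q (Suc m) (unitv (m+2)) = 0" using Q_unit_mid[of "Suc m"] m by simp
  show "Cf (Suc m) (unitv (m+2)) x = 0" using m by (intro Cf_unit) auto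
  show "Pol (Suc m) (unitv (m+2)) x = x (m+3)" using m Pol_unit[of "m+2" "Suc m" x] by simp
  then show "Pol (Suc m) x (unitv (m+2)) = x (m+3)" by (simp add: Pol_sym)
  show "unitv (m+2) \<in> Z (Suc m) b" using m by (simp add: Z_def K0_def unitv_def)
  show "unitv (m+2) \<notin> Vp (Suc m)" by (simp add: Vp_def unitv_def)
qed

lemma f_facts:
  assumes m: "m \<ge> 2"
  shows "unitv (m+3) \<in> coordspace (2*Suc m+2)" "Q (Suc m) (unitv (m+3)) = 0"
    "Cf (Suc m) (unitv (m+3)) x = 0" "Pol (Suc m) (unitv (m+3)) x = x (m+2)"
    "Pol (Suc m) x (unitv (m+3)) = x (m+2)"
proof -
  show "unitv (m+3) \<in> coordspace (2*Suc m+2)" by (rule unit_coord) simp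
  show "Q (Suc m) (unitv (m+3)) = 0" using Q_unit_mid2[of "Suc m"] m by (simp add: numeral_3_eq_3)
  show "Cf (Suc m) (unitv (m+3)) x = 0" using m by (intro Cf_unit) auto
  show "Pol (Suc m) (unitv (m+3)) x = x (m+2)" using m Pol_unit[of "m+3" "Suc m" x] by simp
  then show "Pol (Suc m) x (unitv (m+3)) = x (m+2)" by (simp add: Pol_sym)
qed

lemma Vp_coords: "u \<in> Vp (Suc m) \<Longrightarrow> u (m+2) = 0 \<and> u (m+3) = 0 \<and> u \<in> coordspace (2*Suc m+2)"
  by (auto simp: Vp_def coordspace_def numeral_3_eq_3)

lemma Q_addl:
  assumes m: "m \<ge> 2" and u: "u (m+3) = 0"
  shows "Q (Suc m) (vscale c (unitv (m+2)) + u) = Q (Suc m) u"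
  using e_facts[OF m] u by (simp add: Q_add Q_scale Pol_scale)

lemma Cf_addl: "m \<ge> 2 \<Longrightarrow> Cf (Suc m) (vscale c (unitv (m+2)) + u) y = Cf (Suc m) u y"
  using e_facts by (simp add: Cf_add Cf_scale)

lemma class1:
  assumes m: "m \<ge> 2"
  shows "card {W \<in> GS (Suc m) b. unitv (m+2) \<in> W} = card (GP m b)"
proof -
  let ?e = "unitv (m+2) :: nat \<Rightarrow> 'a"
  let ?A = "\<lambda>U. (\<lambda>(c,u). vscale c ?e + u) ` (UNIV \<times> U)"
  have "bij_betw ?A (GP m b) {W \<in> GS (Suc m) b. ?e \<in> W}"
  proof (rule bij_betw_byWitness[where f'="\<lambda>W. {x\<in>W. x (m+2) = 0}"])
    show "\<forall>U\<in>GP m b. {x \<in> ?A U. x (m+2) = 0} = U"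
    proof
      fix U assume U: "U \<in> GP m b"
      show "{x \<in> ?A U. x (m+2) = 0} = U"
      proof safe
        fix c u assume "u \<in> U" "(vscale c ?e + u) (m+2) = 0"
        moreover then have "u (m+2) = 0" using U Vp_coords by (auto simp: GP_def)
        ultimately show "vscale c ?e + u \<in> U" by (simp add: vscale_apply unitv_def fun_eq_iff)
      next
        fix u assume u: "u \<in> U"
        then show "u \<in> ?A U" by (intro rev_image_eqI[of "(0, u)"]) (auto simp: vscale_def)
        show "u (m+2) = 0" using U u Vp_coords by (auto simp: GP_def)
      qed
    qed
    show "\<forall>W\<in>{W \<in> GS (Suc m) b. ?e \<in> W}. ?A {x \<in> W. x (m+2) = 0} = W"
    proof
      fix W assume W: "W \<in> {W \<in> GS (Suc m) b. ?e \<in> W}"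
      then have sW: "VS.subspace W" and eW: "?e \<in> W" by (auto simp: GS_def TS_def)
      show "?A {x \<in> W. x (m+2) = 0} = W"
      proof safe
        fix c u assume "u \<in> W"
        then show "vscale c ?e + u \<in> W" using sW eW VS.subspace_add VS.subspace_scale by blast
      next
        fix x assume x: "x \<in> W"
        have "x(m+2 := 0) = x + vscale (x (m+2)) ?e"
          by (auto simp: fun_eq_iff vscale_apply unitv_def)
        then have "x(m+2 := 0) \<in> W" using x sW eW VS.subspace_add VS.subspace_scale by metis
        then show "x \<in> ?A {x \<in> W. x (m+2) = 0}"
          by (intro rev_image_eqI[of "(x (m+2), x(m+2 := 0))"]) (auto simp: fun_eq_iff vscale_apply unitv_def)
      qed
    qed
    show "?A ` GP m b \<subseteq> {W \<in> GS (Suc m) b. ?e \<in> W}"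
    proof
      fix W assume "W \<in> ?A ` GP m b"
      then obtain U where U: "U \<in> GP m b" and WU: "W = ?A U" by blast
      have h: "U \<subseteq> Vp (Suc m)" "VS.subspace U" "\<forall>x\<in>U. Q (Suc m) x = 0"
        "\<forall>x\<in>U. \<forall>y\<in>U. Cf (Suc m) x y = 0" "card U = card (UNIV::'a set) ^ m" "U \<subseteq> Z (Suc m) b"
        using U by (auto simp: GP_def)
      have fU: "finite U" using h(1) finite_subset[OF _ finite_coordspace] Vp_coords by blast
      have eU: "?e \<notin> U" using e_facts(7)[OF m] h(1) by blast
      have cW: "card W = card (UNIV::'a set) ^ Suc m"
        using addl_card[OF h(2) eU fU] h(5) WU by simp
      have sub: "VS.subspace W" using addl_subspace[OF h(2)] WU by simp
      have co: "W \<subseteq> coordspace (2*Suc m+2)"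
      proof
        fix x assume "x \<in> W"
        then obtain c u where "u \<in> U" "x = vscale c ?e + u" using WU by auto
        moreover have "vscale c ?e \<in> coordspace (2*Suc m+2)" using e_facts(1)[OF m]
          by (auto simp: coordspace_def vscale_apply)
        ultimately show "x \<in> coordspace (2*Suc m+2)" using h(1) Vp_coords
          by (auto simp: coordspace_def)
      qed
      have qq: "\<forall>x\<in>W. Q (Suc m) x = 0"
        using WU h(1,3) Q_addl[OF m] Vp_coords by auto
      have cf: "\<forall>x\<in>W. \<forall>y\<in>W. Cf (Suc m) x y = 0"
      proof (intro ballI)
        fix x y assume "x \<in> W" "y \<in> W"
        then obtain c u c' u' where "u \<in> U" "x = vscale c ?e + u" "u' \<in> U" "y = vscale c' ?e + u'"
          using WU by auto
        then show "Cf (Suc m) x y = 0" using h(4) Cf_addl[OF m] Cf_sym by metis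
      qed
      have z: "W \<subseteq> Z (Suc m) b"
      proof
        fix x assume "x \<in> W"
        then obtain c u where "u \<in> U" "x = vscale c ?e + u" using WU by auto
        then show "x \<in> Z (Suc m) b" using h(6) e_facts(6)[OF m] Z_sub VS.subspace_add VS.subspace_scale
          by blast
      qed
      have "vscale 1 ?e + 0 = ?e" by (simp add: fun_eq_iff vscale_apply)
      moreover have "(1::'a, 0) \<in> UNIV \<times> U" using h(2) VS.subspace_0 by blast
      ultimately have "?e \<in> W" unfolding WU by (metis (no_types, lifting) case_prod_conv image_eqI)
      then show "W \<in> {W \<in> GS (Suc m) b. ?e \<in> W}"
        using cW sub co qq cf z by (auto simp: GS_def TS_def)
    qed
    show "(\<lambda>W. {x\<in>W. x (m+2) = 0}) ` {W \<in> GS (Suc m) b. ?e \<in> W} \<subseteq> GP m b"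
    proof
      fix U assume "U \<in> (\<lambda>W. {x\<in>W. x (m+2) = 0}) ` {W \<in> GS (Suc m) b. ?e \<in> W}"
      then obtain W where W: "W \<in> GS (Suc m) b" "?e \<in> W" and UW: "U = {x\<in>W. x (m+2) = 0}" by blast
      have T: "TS (Suc m) W" and cW: "card W = card (UNIV::'a set) ^ Suc m" and zW: "W \<subseteq> Z (Suc m) b"
        using W by (auto simp: GS_def)
      have sW: "VS.subspace W" using T by (simp add: TS_def)
      have perp: "x (m+3) = 0" if "x \<in> W" for x
        using Pol_TS[OF T W(2) that] e_facts(4)[OF m] by simp
      have linc: "\<And>x y. x \<in> W \<Longrightarrow> y \<in> W \<Longrightarrow> (x + y) (m+2) = x (m+2) + y (m+2)"
        "\<And>c x. x \<in> W \<Longrightarrow> (vscale c x) (m+2) = c * x (m+2)" by (simp_all add: vscale_apply)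
      have e1: "?e (m+2) \<noteq> 0" by (simp add: unitv_def)
      have "card W = card (UNIV::'a set) * card U" unfolding UW
        by (rule hyperplane_card(1)[OF sW finite_TS[OF T] linc W(2) e1])
      then have cU: "card U = card (UNIV::'a set) ^ m" using cW by simp
      have "U \<subseteq> Vp (Suc m)" using T perp unfolding UW TS_def Vp_def coordspace_def
        by (auto simp: numeral_3_eq_3)
      then show "U \<in> GP m b" unfolding GP_def using cU subspace_ker[OF sW] T zW unfolding UW TS_def
        by auto
    qed
  qed
  then show ?thesis by (simp add: bij_betw_same_card)
qed

end


context qsetup begin

definition Tm :: "nat \<Rightarrow> (nat \<Rightarrow> 'a) \<Rightarrow> 'a \<Rightarrow> (nat \<Rightarrow> 'a) \<Rightarrow> (nat \<Rightarrow> 'a)" where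
  "Tm m w c u = vscale c w + (u + vscale (Pol (Suc m) w u) (unitv (m+2)))"
definition Wf where "Wf m U w = (\<lambda>(c,u). Tm m w c u) ` (UNIV \<times> U)"
definition Uf where "Uf m W = (\<lambda>x. x(m+2 := 0)) ` {x\<in>W. x (m+3) = (0::'a)}"
definition Aset where "Aset m b U = {w \<in> coordspace (2*Suc m+2). w (m+3) = 1 \<and> Q (Suc m) w = 0
   \<and> (\<forall>u\<in>U. Cf (Suc m) w u = 0) \<and> w \<in> Z (Suc m) b}"
definition C2 where "C2 m b = {W \<in> GS (Suc m) b. unitv (m+2) \<notin> W}"

lemma sum_eq0: "(a::'a) + b = 0 \<Longrightarrow> a = b"
  by (metis add_eq_0_iff minus_eq)

lemma Pol_kill:
  assumes m: "m \<ge> 2"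
  shows "Pol (Suc m) w x = Pol (Suc m) w (x(m+2 := 0)) + x (m+2) * w (m+3)"
proof -
  have "Pol (Suc m) w x = Pol (Suc m) w (x(m+2 := 0) + vscale (x (m+2)) (unitv (m+2)))"
    using kill_decomp[of x "m+2"] by simp
  then show ?thesis using e_facts(5)[OF m] by (simp add: Pol_add Pol_scale)
qed

lemma Tm_l: "u (m+3) = 0 \<Longrightarrow> Tm m w c u (m+3) = c * w (m+3)"
  by (simp add: Tm_def vscale_apply unitv_def)

lemma Tm_kill: "u (m+2) = 0 \<Longrightarrow> (Tm m w c u - vscale c w)(m+2 := 0) = u"
  by (auto simp: Tm_def vscale_apply unitv_def fun_eq_iff)

lemma Tm_add: "Tm m w c u + Tm m w c' u' = Tm m w (c + c') (u + u')"
  by (simp add: Tm_def Pol_add fun_eq_iff vscale_apply algebra_simps)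

lemma Tm_scale: "vscale a (Tm m w c u) = Tm m w (a * c) (vscale a u)"
  by (simp add: Tm_def Pol_scale fun_eq_iff vscale_apply algebra_simps)

lemma Tm_zero: "Tm m w 0 0 = 0"
proof -
  have v0: "vscale 0 (0::nat\<Rightarrow>'a) = 0" by (simp add: fun_eq_iff vscale_apply)
  have "Pol (Suc m) w 0 = 0" using Pol_scale(2)[of "Suc m" w 0 0] v0 by simp
  then show ?thesis by (simp add: Tm_def fun_eq_iff vscale_apply)
qed

lemma Tm_Q:
  assumes m: "m \<ge> 2" and w: "w (m+3) = 1" "Q (Suc m) w = 0" and u: "u (m+3) = 0" "Q (Suc m) u = 0"
  shows "Q (Suc m) (Tm m w c u) = 0"
proof -
  let ?e = "unitv (m+2) :: nat \<Rightarrow> 'a" and ?l = "Pol (Suc m) w u"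
  have a: "Q (Suc m) (u + vscale ?l ?e) = 0"
    using e_facts[OF m] u by (simp add: Q_add Q_scale Pol_scale)
  have b: "Pol (Suc m) w (u + vscale ?l ?e) = 0"
    using e_facts[OF m] w by (simp add: Pol_add Pol_scale)
  show ?thesis unfolding Tm_def using a b w by (simp add: Q_add Q_scale Pol_scale)
qed

lemma Tm_Cf:
  assumes m: "m \<ge> 2" and "Cf (Suc m) w u' = 0" "Cf (Suc m) u w = 0" "Cf (Suc m) u u' = 0"
  shows "Cf (Suc m) (Tm m w c u) (Tm m w c' u') = 0"
  unfolding Tm_def using assms e_facts[OF m] Cf_sym[of "Suc m" _ "unitv (m+2)"]
  by (simp add: Cf_add Cf_scale)

lemma Wf_sub: "VS.subspace U \<Longrightarrow> VS.subspace (Wf m U w)"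
proof -
  assume U: "VS.subspace U"
  have z: "0 \<in> Wf m U w" unfolding Wf_def using Tm_zero U VS.subspace_0
    by (metis (no_types, lifting) UNIV_I case_prod_conv image_eqI mem_Sigma_iff)
  have a: "x + y \<in> Wf m U w" if xy: "x \<in> Wf m U w" "y \<in> Wf m U w" for x y
  proof -
    obtain c u where h1: "u \<in> U" "x = Tm m w c u" using xy(1) unfolding Wf_def by auto
    obtain c' u' where h2: "u' \<in> U" "y = Tm m w c' u'" using xy(2) unfolding Wf_def by auto
    have "u + u' \<in> U" using h1 h2 U VS.subspace_add by blast
    then show ?thesis unfolding Wf_def h1(2) h2(2) Tm_add by (intro rev_image_eqI[of "(c + c', u + u')"]) auto
  qed
  have sc: "vscale a x \<in> Wf m U w" if xx: "x \<in> Wf m U w" for x a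
  proof -
    obtain c u where h: "u \<in> U" "x = Tm m w c u" using xx unfolding Wf_def by auto
    have "vscale a u \<in> U" using h U VS.subspace_scale by blast
    then show ?thesis unfolding Wf_def h(2) Tm_scale by (intro rev_image_eqI[of "(a * c, vscale a u)"]) auto
  qed
  show ?thesis by (rule VS.subspaceI[OF z a sc])
qed

lemma Wf_card:
  assumes "\<forall>u\<in>U. u (m+2) = 0 \<and> u (m+3) = 0" "w (m+3) = 1" "finite U"
  shows "card (Wf m U w) = card (UNIV::'a set) * card U"
proof -
  have inj: "inj_on (\<lambda>(c,u). Tm m w c u) (UNIV \<times> U)"
  proof (rule inj_on_inverseI[where g="\<lambda>y. (y (m+3), (y - vscale (y (m+3)) w)(m+2 := 0))"])
    fix p :: "'a \<times> (nat \<Rightarrow> 'a)" assume "p \<in> UNIV \<times> U"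
    then obtain c :: 'a and u where p: "p = (c, u)" "u \<in> U" by auto
    then have "Tm m w c u (m+3) = c" using assms Tm_l by simp
    then show "(\<lambda>y. (y (m+3), (y - vscale (y (m+3)) w)(m+2 := 0))) ((\<lambda>(c,u). Tm m w c u) p) = p"
      using p assms Tm_kill by simp
  qed
  show ?thesis unfolding Wf_def using card_image[OF inj] by (simp add: card_cartesian_product)
qed

lemma Wf_Uf:
  assumes "\<forall>u\<in>U. u (m+2) = 0 \<and> u (m+3) = 0" "w (m+3) = 1"
  shows "Uf m (Wf m U w) = U"
proof safe
  fix y assume "y \<in> Uf m (Wf m U w)"
  then obtain x where x: "x \<in> Wf m U w" "x (m+3) = 0" "y = x(m+2 := 0)" unfolding Uf_def by auto
  then obtain c u where cu: "u \<in> U" "x = Tm m w c u" unfolding Wf_def by auto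
  then have "c = 0" using Tm_l[of u m w c] assms x(2) by simp
  have v0: "vscale 0 w = 0" by (simp add: fun_eq_iff vscale_apply)
  have "y = (Tm m w c u - vscale c w)(m+2 := 0)" using x(3) cu(2) \<open>c = 0\<close> v0 by simp
  then show "y \<in> U" using Tm_kill[of u m w c] cu assms by simp
next
  fix u assume u: "u \<in> U"
  then have "Tm m w 0 u \<in> Wf m U w" unfolding Wf_def by (intro rev_image_eqI[of "(0, u)"]) auto
  moreover have "Tm m w 0 u (m+3) = 0" using Tm_l[of u m w 0] u assms by simp
  moreover have "vscale 0 w = 0" by (simp add: fun_eq_iff vscale_apply)
  moreover then have "(Tm m w 0 u)(m+2 := 0) = u" using Tm_kill[of u m w 0] u assms by simp
  ultimately show "u \<in> Uf m (Wf m U w)" unfolding Uf_def by (metis (mono_tags, lifting) image_eqI mem_Collect_eq)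
qed

end


lemma coord_sub: "VS.subspace (coordspace N :: (nat \<Rightarrow> 'a::field) set)"
  unfolding VS.subspace_def coordspace_def by (auto simp: vscale_apply)

context qsetup begin

lemma Pol_zero2[simp]: "Pol n w 0 = 0"
proof -
  have v0: "vscale 0 (0::nat\<Rightarrow>'a) = 0" by (simp add: fun_eq_iff vscale_apply)
  show ?thesis using Pol_scale(2)[of n w 0 0] v0 by simp
qed

lemma Z_kill: "m \<ge> 1 \<Longrightarrow> x \<in> Z (Suc m) b \<Longrightarrow> x(m+2 := c) \<in> Z (Suc m) b"
  by (auto simp: Z_def K0_def)

lemma backward:
  assumes m: "m \<ge> 2" and U: "U \<in> GP m b" and w: "w \<in> Aset m b U"
  shows "Wf m U w \<in> C2 m b \<and> w \<in> Wf m U w \<and> Uf m (Wf m U w) = U"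
proof -
  let ?e = "unitv (m+2) :: nat \<Rightarrow> 'a"
  have h: "U \<subseteq> Vp (Suc m)" "VS.subspace U" "\<forall>x\<in>U. Q (Suc m) x = 0"
    "\<forall>x\<in>U. \<forall>y\<in>U. Cf (Suc m) x y = 0" "card U = card (UNIV::'a set) ^ m" "U \<subseteq> Z (Suc m) b"
    using U by (auto simp: GP_def)
  have wa: "w \<in> coordspace (2*Suc m+2)" "w (m+3) = 1" "Q (Suc m) w = 0"
    "\<forall>u\<in>U. Cf (Suc m) w u = 0" "w \<in> Z (Suc m) b" using w by (auto simp: Aset_def)
  have uc: "\<forall>u\<in>U. u (m+2) = 0 \<and> u (m+3) = 0" using h(1) Vp_coords by blast
  have fU: "finite U" using h(1) finite_subset[OF _ finite_coordspace] Vp_coords by blast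
  have sub: "VS.subspace (Wf m U w)" by (rule Wf_sub[OF h(2)])
  have card: "card (Wf m U w) = card (UNIV::'a set) ^ Suc m" using Wf_card[of U m w, OF uc wa(2) fU] h(5) by simp
  have memb: "\<And>y. y \<in> Wf m U w \<Longrightarrow> \<exists>c u. u \<in> U \<and> y = Tm m w c u" unfolding Wf_def by auto
  have co: "Wf m U w \<subseteq> coordspace (2*Suc m+2)"
  proof
    fix y assume "y \<in> Wf m U w"
    then obtain c u where cu: "u \<in> U" "y = Tm m w c u" using memb by blast
    have "u \<in> coordspace (2*Suc m+2)" using cu h(1) Vp_coords by blast
    then show "y \<in> coordspace (2*Suc m+2)" unfolding cu Tm_def
      using wa(1) e_facts(1)[OF m] coord_sub VS.subspace_add VS.subspace_scale by metis
  qed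
  have qz: "\<forall>y\<in>Wf m U w. Q (Suc m) y = 0"
  proof
    fix y assume "y \<in> Wf m U w"
    then obtain c u where cu: "u \<in> U" "y = Tm m w c u" using memb by blast
    show "Q (Suc m) y = 0" unfolding cu(2) by (rule Tm_Q[OF m wa(2,3)]) (use cu uc h(3) in auto)
  qed
  have cf: "\<forall>x\<in>Wf m U w. \<forall>y\<in>Wf m U w. Cf (Suc m) x y = 0"
  proof (intro ballI)
    fix x y assume "x \<in> Wf m U w" "y \<in> Wf m U w"
    then obtain c u c' u' where cu: "u \<in> U" "x = Tm m w c u" "u' \<in> U" "y = Tm m w c' u'" using memb by metis
    show "Cf (Suc m) x y = 0" unfolding cu(2,4)
      by (rule Tm_Cf[OF m]) (use cu wa(4) h(4) Cf_sym in metis)+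
  qed
  have zz: "Wf m U w \<subseteq> Z (Suc m) b"
  proof
    fix y assume "y \<in> Wf m U w"
    then obtain c u where cu: "u \<in> U" "y = Tm m w c u" using memb by blast
    then show "y \<in> Z (Suc m) b" unfolding cu Tm_def
      using wa(5) h(6) e_facts(6)[OF m] Z_sub VS.subspace_add VS.subspace_scale by (metis subsetD)
  qed
  have ne: "?e \<notin> Wf m U w"
  proof
    assume "?e \<in> Wf m U w"
    then obtain c u where cu: "u \<in> U" "?e = Tm m w c u" using memb by blast
    have "Tm m w c u (m+3) = c" using Tm_l[of u m w c] uc cu wa(2) by simp
    then have "c = ?e (m+3)" using cu(2) by simp
    then have c0: "c = 0" by (simp add: unitv_def)
    have v0: "vscale 0 w = 0" by (simp add: fun_eq_iff vscale_apply)
    have "u = (Tm m w c u - vscale c w)(m+2 := 0)" using Tm_kill[of u m w c] uc cu by simp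
    also have "\<dots> = ?e(m+2 := 0)" using cu(2) c0 v0 by simp
    also have "\<dots> = 0" by (simp add: fun_eq_iff unitv_def)
    finally have "u = 0" .
    then have "?e = 0" using cu(2) c0 Tm_zero by simp
    moreover have "?e (m+2) = 1" by (simp add: unitv_def)
    ultimately show False by simp
  qed
  have wW: "w \<in> Wf m U w"
  proof -
    have "Tm m w 1 0 = w" by (simp add: Tm_def fun_eq_iff vscale_apply)
    moreover have "(1::'a, 0) \<in> UNIV \<times> U" using h(2) VS.subspace_0 by blast
    ultimately show ?thesis unfolding Wf_def by (metis (no_types, lifting) case_prod_conv image_eqI)
  qed
  show ?thesis using sub card co qz cf zz ne wW Wf_Uf[of U m w, OF uc wa(2)]
    by (auto simp: C2_def GS_def TS_def)
qed

lemma forward: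
  assumes m: "m \<ge> 2" and W: "W \<in> C2 m b" and w: "w \<in> W" "w (m+3) = 1"
  shows "Uf m W \<in> GP m b \<and> w \<in> Aset m b (Uf m W) \<and> Wf m (Uf m W) w = W"
proof -
  let ?e = "unitv (m+2) :: nat \<Rightarrow> 'a"
  have T: "TS (Suc m) W" and cW: "card W = card (UNIV::'a set) ^ Suc m" and zW: "W \<subseteq> Z (Suc m) b" and eW: "?e \<notin> W"
    using W by (auto simp: C2_def GS_def)
  have sW: "VS.subspace W" using T by (simp add: TS_def)
  define Wl where "Wl = {x\<in>W. x (m+3) = 0}"
  have sWl: "VS.subspace Wl" unfolding Wl_def by (rule subspace_ker[OF sW])
  have K: "(\<lambda>x. x(m+2 := 0)) ` Wl \<subseteq> Vp (Suc m) \<and> VS.subspace ((\<lambda>x. x(m+2 := 0)) ` Wl)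
     \<and> (\<forall>x\<in>(\<lambda>x. x(m+2 := 0)) ` Wl. Q (Suc m) x = 0)
     \<and> (\<forall>x\<in>(\<lambda>x. x(m+2 := 0)) ` Wl. \<forall>y\<in>(\<lambda>x. x(m+2 := 0)) ` Wl. Cf (Suc m) x y = 0)"
    by (rule kill_TS[OF m T sWl]) (simp add: Wl_def)
  have inj: "inj_on (\<lambda>x. x(m+2 := 0)) Wl"
    using kill_inj[OF sW eW] unfolding Wl_def by (rule inj_on_subset) auto
  have linc: "\<And>x y. x \<in> W \<Longrightarrow> y \<in> W \<Longrightarrow> (x + y) (m+3) = x (m+3) + y (m+3)"
    "\<And>c x. x \<in> W \<Longrightarrow> (vscale c x) (m+3) = c * x (m+3)" by (simp_all add: vscale_apply)
  have w1: "w (m+3) \<noteq> 0" using w by simp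
  have "card W = card (UNIV::'a set) * card Wl" unfolding Wl_def by (rule hyperplane_card(1)[OF sW finite_TS[OF T] linc w(1) w1])
  then have cWl: "card Wl = card (UNIV::'a set) ^ m" using cW by simp
  have UfW: "Uf m W = (\<lambda>x. x(m+2 := 0)) ` Wl" by (simp add: Uf_def Wl_def)
  have zU: "Uf m W \<subseteq> Z (Suc m) b" unfolding UfW Wl_def using zW Z_kill m by auto
  have GP: "Uf m W \<in> GP m b" unfolding GP_def using K zU cWl card_image[OF inj] UfW by auto
  have A: "w \<in> Aset m b (Uf m W)"
  proof -
    have "Cf (Suc m) w u = 0" if "u \<in> Uf m W" for u
    proof -
      have "u \<in> (\<lambda>x. x(m+2 := 0)) ` {x\<in>W. x (m+3) = 0}" using that unfolding UfW Wl_def .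
      then obtain x where x: "x \<in> W" "u = x(m+2 := 0)" by blast
      have "Cf (Suc m) w x = 0" using T x(1) w(1) by (auto simp: TS_def)
      then show ?thesis using x(2) m by (simp add: Cf_def)
    qed
    then show ?thesis using T w zW by (auto simp: Aset_def TS_def)
  qed
  have key: "Tm m w c (x(m+2 := 0)) = vscale c w + x" if x: "x \<in> W" "x (m+3) = 0" for x c
  proof -
    have "Pol (Suc m) w x = 0" using Pol_TS[OF T w(1) x(1)] .
    then have "Pol (Suc m) w (x(m+2 := 0)) = x (m+2)" using Pol_kill[OF m, of w x] w(2) sum_eq0 by simp
    then show ?thesis unfolding Tm_def using kill_decomp[of x "m+2"] by (simp add: add.assoc)
  qed
  have "Wf m (Uf m W) w = W"
  proof safe
    fix y assume "y \<in> Wf m (Uf m W) w"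
    then obtain c u where cu: "u \<in> Uf m W" "y = Tm m w c u" unfolding Wf_def by auto
    then obtain x where x: "x \<in> W" "x (m+3) = 0" "u = x(m+2 := 0)" unfolding UfW Wl_def by auto
    have "y = vscale c w + x" using key[OF x(1,2)] cu x by simp
    then show "y \<in> W" using sW w(1) x(1) VS.subspace_add VS.subspace_scale by metis
  next
    fix y assume y: "y \<in> W"
    define x where "x = y - vscale (y (m+3)) w"
    have "vscale (y (m+3)) w \<in> W" by (rule VS.subspace_scale[OF sW w(1)])
    then have x: "x \<in> W" "x (m+3) = 0" unfolding x_def using y w(2) sW VS.subspace_diff
      by (auto simp: vscale_apply)
    have "x(m+2 := 0) \<in> Uf m W" unfolding UfW Wl_def using x by auto
    moreover have "y = Tm m w (y (m+3)) (x(m+2 := 0))"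
    proof -
      have "Tm m w (y (m+3)) (x(m+2 := 0)) = vscale (y (m+3)) w + x" using key[OF x] .
      also have "\<dots> = y" unfolding x_def by simp
      finally show ?thesis by simp
    qed
    ultimately show "y \<in> Wf m (Uf m W) w" unfolding Wf_def
      by (intro rev_image_eqI[of "(y (m+3), x(m+2 := 0))"]) auto
  qed
  then show ?thesis using GP A by simp
qed

end


context qsetup begin

lemma fiber_card:
  assumes m: "m \<ge> 2" and W: "W \<in> C2 m b"
  shows "card {w\<in>W. w (m+3) = 1} = card (UNIV::'a set) ^ m"
proof -
  let ?e = "unitv (m+2) :: nat \<Rightarrow> 'a"
  have T: "TS (Suc m) W" and cW: "card W = card (UNIV::'a set) ^ Suc m" and eW: "?e \<notin> W"
    using W by (auto simp: C2_def GS_def)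
  have sW: "VS.subspace W" using T by (simp add: TS_def)
  have fW: "finite W" using finite_TS[OF T] .
  have "\<exists>x\<in>W. x (m+3) \<noteq> 0"
  proof (rule ccontr)
    assume "\<not> (\<exists>x\<in>W. x (m+3) \<noteq> 0)"
    then have perp: "\<forall>x\<in>W. x (m+3) = 0" by blast
    let ?W' = "(\<lambda>(c,u). vscale c ?e + u) ` (UNIV \<times> W)"
    have c': "card ?W' = card (UNIV::'a set) * card W" by (rule addl_card[OF sW eW fW])
    have "TS (Suc m) ?W'" unfolding TS_def
    proof (intro conjI)
      show "?W' \<subseteq> coordspace (2 * Suc m + 2)"
      proof
        fix x assume "x \<in> ?W'"
        then obtain c u where cu: "u \<in> W" "x = vscale c ?e + u" by auto
        then have "u \<in> coordspace (2 * Suc m + 2)" using T unfolding TS_def by blast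
        then show "x \<in> coordspace (2 * Suc m + 2)" unfolding cu(2)
          using e_facts(1)[OF m] coord_sub VS.subspace_add VS.subspace_scale by metis
      qed
      show "VS.subspace ?W'" by (rule addl_subspace[OF sW])
      show "\<forall>x\<in>?W'. Q (Suc m) x = 0" using Q_addl[OF m] perp T unfolding TS_def by auto
      show "\<forall>x\<in>?W'. \<forall>y\<in>?W'. Cf (Suc m) x y = 0"
      proof (intro ballI)
        fix x y assume "x \<in> ?W'" "y \<in> ?W'"
        then obtain c u c' u' where "u \<in> W" "x = vscale c ?e + u" "u' \<in> W" "y = vscale c' ?e + u'"
          by auto
        then show "Cf (Suc m) x y = 0" using T Cf_addl[OF m] Cf_sym unfolding TS_def by metis
      qed
    qed
    then have "card ?W' \<le> card (UNIV::'a set) ^ Suc m" using Witt[of "Suc m"] m by simp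
    then show False using c' cW q_ge2[where 'a='a] by simp
  qed
  then obtain t where t: "t \<in> W" "t (m+3) \<noteq> 0" by blast
  have linc: "\<And>x y. x \<in> W \<Longrightarrow> y \<in> W \<Longrightarrow> (x + y) (m+3) = x (m+3) + y (m+3)"
    "\<And>c x. x \<in> W \<Longrightarrow> (vscale c x) (m+3) = c * x (m+3)" by (simp_all add: vscale_apply)
  have "card W = card (UNIV::'a set) * card {x\<in>W. x (m+3) = 0}" by (rule hyperplane_card(1)[OF sW fW linc t])
  moreover have "card {x\<in>W. x (m+3) = 1} = card {x\<in>W. x (m+3) = 0}" by (rule hyperplane_card(2)[OF sW fW linc t])
  ultimately show ?thesis using cW by simp
qed

lemma finite_GS: "finite (GS n b)"
proof -
  have "GS n b \<subseteq> Pow (coordspace (2*n+2))" by (auto simp: GS_def TS_def)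
  then show ?thesis using finite_coordspace finite_subset by blast
qed

lemma finite_GP: "finite (GP m b)"
proof -
  have "GP m b \<subseteq> Pow (coordspace (2*Suc m+2))" using Vp_coords by (auto simp: GP_def)
  then show ?thesis using finite_coordspace finite_subset by blast
qed

lemma class2_sum:
  assumes m: "m \<ge> 2"
  shows "card (C2 m b) * card (UNIV::'a set) ^ m = (\<Sum>U\<in>GP m b. card (Aset m b U))"
proof -
  let ?PW = "Sigma (C2 m b) (\<lambda>W. {w\<in>W. w (m+3) = 1})"
  let ?PU = "Sigma (GP m b) (Aset m b)"
  have bij: "bij_betw (\<lambda>(W,w). (Uf m W, w)) ?PW ?PU"
  proof (rule bij_betw_byWitness[where f'="\<lambda>(U,w). (Wf m U w, w)"])
    show "\<forall>p\<in>?PW. (\<lambda>(U,w). (Wf m U w, w)) ((\<lambda>(W,w). (Uf m W, w)) p) = p"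
      using forward[OF m] by auto
    show "\<forall>p\<in>?PU. (\<lambda>(W,w). (Uf m W, w)) ((\<lambda>(U,w). (Wf m U w, w)) p) = p"
      using backward[OF m] by auto
    show "(\<lambda>(W,w). (Uf m W, w)) ` ?PW \<subseteq> ?PU" using forward[OF m] by auto
    show "(\<lambda>(U,w). (Wf m U w, w)) ` ?PU \<subseteq> ?PW" using backward[OF m] by (auto simp: Aset_def)
  qed
  have fC2: "finite (C2 m b)" using finite_GS[of "Suc m" b] by (simp add: C2_def)
  have "card ?PW = (\<Sum>W\<in>C2 m b. card {w\<in>W. w (m+3) = 1})"
    by (rule card_SigmaI) (use fC2 finite_TS in \<open>auto simp: C2_def GS_def\<close>)
  also have "\<dots> = card (C2 m b) * card (UNIV::'a set) ^ m" using fiber_card[OF m] by simp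
  finally have 1: "card ?PW = card (C2 m b) * card (UNIV::'a set) ^ m" .
  have fA: "finite (Aset m b U)" for U
    by (rule finite_subset[OF _ finite_coordspace[of "2*Suc m+2"]]) (auto simp: Aset_def)
  have "card ?PU = (\<Sum>U\<in>GP m b. card (Aset m b U))"
    by (rule card_SigmaI) (use finite_GP fA in auto)
  then show ?thesis using 1 bij_betw_same_card[OF bij] by simp
qed

end


context qsetup begin

definition Bset where "Bset m b U = {v \<in> Vp (Suc m). (\<forall>u\<in>U. Cf (Suc m) v u = 0) \<and> v \<in> Z (Suc m) b}"

lemma Q_lift:
  assumes m: "m \<ge> 2" and v: "v (m+2) = 0" "v (m+3) = 0"
  shows "Q (Suc m) (v(m+2 := a, m+3 := 1)) = Q (Suc m) v + a"
proof -
  let ?e = "unitv (m+2) :: nat \<Rightarrow> 'a" and ?f = "unitv (m+3) :: nat \<Rightarrow> 'a"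
  have eq: "v(m+2 := a, m+3 := 1) = (v + vscale a ?e) + ?f"
    using v by (auto simp: fun_eq_iff vscale_apply unitv_def)
  have "Q (Suc m) (v + vscale a ?e) = Q (Suc m) v" using e_facts[OF m] v by (simp add: Q_add Q_scale Pol_scale)
  moreover have "Pol (Suc m) (v + vscale a ?e) ?f = a" using f_facts[OF m] v
    by (simp add: Pol_add Pol_scale unitv_def)
  ultimately show ?thesis unfolding eq using f_facts[OF m] by (simp add: Q_add)
qed

lemma Aset_Bset:
  assumes m: "m \<ge> 2"
  shows "card (Aset m b U) = card (Bset m b U)"
proof -
  have "bij_betw (\<lambda>w. w(m+2 := 0, m+3 := 0)) (Aset m b U) (Bset m b U)"
  proof (rule bij_betw_byWitness[where f'="\<lambda>v. v(m+2 := Q (Suc m) v, m+3 := 1)"])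
    show "\<forall>w\<in>Aset m b U. (w(m+2 := 0, m+3 := 0))(m+2 := Q (Suc m) (w(m+2 := 0, m+3 := 0)), m+3 := 1) = w"
    proof
      fix w assume w: "w \<in> Aset m b U"
      let ?v = "w(m+2 := 0, m+3 := 0)"
      have "Q (Suc m) (?v(m+2 := w (m+2), m+3 := 1)) = Q (Suc m) ?v + w (m+2)"
        by (rule Q_lift[OF m]) auto
      moreover have "?v(m+2 := w (m+2), m+3 := 1) = w" using w by (auto simp: Aset_def fun_eq_iff)
      ultimately have "Q (Suc m) ?v = w (m+2)" using w sum_eq0 by (auto simp: Aset_def)
      then show "?v(m+2 := Q (Suc m) ?v, m+3 := 1) = w" using w by (auto simp: Aset_def fun_eq_iff)
    qed
    show "\<forall>v\<in>Bset m b U. (v(m+2 := Q (Suc m) v, m+3 := 1))(m+2 := 0, m+3 := 0) = v"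
      using Vp_coords by (auto simp: Bset_def fun_eq_iff)
    show "(\<lambda>w. w(m+2 := 0, m+3 := 0)) ` Aset m b U \<subseteq> Bset m b U"
    proof
      fix v assume "v \<in> (\<lambda>w. w(m+2 := 0, m+3 := 0)) ` Aset m b U"
      then obtain w where w: "w \<in> Aset m b U" "v = w(m+2 := 0, m+3 := 0)" by blast
      have "v \<in> Vp (Suc m)" using w unfolding Aset_def Vp_def coordspace_def by auto
      moreover have "\<forall>u\<in>U. Cf (Suc m) v u = 0" using w m by (auto simp: Aset_def Cf_def)
      moreover have "v \<in> Z (Suc m) b" using w m by (auto simp: Aset_def Z_def K0_def)
      ultimately show "v \<in> Bset m b U" by (simp add: Bset_def)
    qed
    show "(\<lambda>v. v(m+2 := Q (Suc m) v, m+3 := 1)) ` Bset m b U \<subseteq> Aset m b U"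
    proof
      fix w assume "w \<in> (\<lambda>v. v(m+2 := Q (Suc m) v, m+3 := 1)) ` Bset m b U"
      then obtain v where v: "v \<in> Bset m b U" "w = v(m+2 := Q (Suc m) v, m+3 := 1)" by blast
      have vc: "v (m+2) = 0" "v (m+3) = 0" "v \<in> coordspace (2*Suc m+2)" using v Vp_coords by (auto simp: Bset_def)
      have "Q (Suc m) w = 0" using Q_lift[OF m vc(1,2)] v(2) by simp
      moreover have "w \<in> coordspace (2*Suc m+2)" using vc(3) v(2) by (auto simp: coordspace_def)
      moreover have "\<forall>u\<in>U. Cf (Suc m) w u = 0" using v m by (auto simp: Bset_def Cf_def)
      moreover have "w \<in> Z (Suc m) b" using v m by (auto simp: Bset_def Z_def K0_def)
      ultimately show "w \<in> Aset m b U" using v(2) by (simp add: Aset_def)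
    qed
  qed
  then show ?thesis by (rule bij_betw_same_card)
qed

lemma Vp_sub: "VS.subspace (Vp n)"
  unfolding VS.subspace_def Vp_def by (auto simp: vscale_apply)

lemma card_Vp: "card (Vp (Suc m)) = card (UNIV::'a set) ^ (2*m+2)" and fin_Vp: "finite (Vp (Suc m))"
proof -
  have c: "card ({1..2*Suc m+2} - {Suc m+1, Suc m+2}) = 2*m+2" by (simp add: card_Diff_subset)
  show "card (Vp (Suc m)) = card (UNIV::'a set) ^ (2*m+2)" "finite (Vp (Suc m))"
    using card_supp[of "{1..2*Suc m+2} - {Suc m+1, Suc m+2}", where 'a='a] c unfolding Vp_def by simp_all
qed

lemma card_VpK:
  assumes m: "m \<ge> 2"
  shows "card (Vp (Suc m) \<inter> K0 (Suc m)) = card (UNIV::'a set) ^ (2*m)"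
proof -
  let ?S = "{1..2*Suc m+2} - {Suc m+1, Suc m+2, 2*Suc m, 2*Suc m+1}"
  have eq: "Vp (Suc m) \<inter> K0 (Suc m) = {x. \<forall>i. i \<notin> ?S \<longrightarrow> x i = 0}"
    unfolding Vp_def K0_def by auto
  have "card {Suc m+1, Suc m+2, 2*Suc m, 2*Suc m+1} = 4" using m by simp
  then have c: "card ?S = 2*m" by (subst card_Diff_subset) auto
  show ?thesis unfolding eq using card_supp[of ?S, where 'a='a] c by simp
qed

lemma Bset_card:
  assumes m: "m \<ge> 2" and iso: "\<forall>x\<in>U. \<forall>y\<in>U. Cf (Suc m) x y = 0"
  shows "card (Bset m b U) = (if b then card (UNIV::'a set) ^ (2*m) else if U \<subseteq> K0 (Suc m) then card (UNIV::'a set) ^ (2*m+2) else card (UNIV::'a set) ^ (2*m+1))"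
proof (cases b)
  case True
  have "Bset m b U = Vp (Suc m) \<inter> K0 (Suc m)" using True by (auto simp: Bset_def Z_def K0_def Cf_def)
  then show ?thesis using card_VpK[OF m] True by simp
next
  case False
  note F = False
  show ?thesis
  proof (cases "U \<subseteq> K0 (Suc m)")
    case True
    have "Bset m b U = Vp (Suc m)" using True F by (auto simp: Bset_def Z_def K0_def Cf_def)
    then show ?thesis using card_Vp True F by simp
  next
    case False
    then obtain u0 where u0: "u0 \<in> U" "u0 \<notin> K0 (Suc m)" by blast
    let ?a = "u0 (2*Suc m)" and ?b = "u0 (2*Suc m + 1)"
    have ab: "?a \<noteq> 0 \<or> ?b \<noteq> 0" using u0 by (auto simp: K0_def)
    have propo: "Cf (Suc m) v u = 0" if v: "Cf (Suc m) v u0 = 0" and u: "u \<in> U" for v u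
    proof -
      have c: "?a * u (2*Suc m+1) + ?b * u (2*Suc m) = 0" using that(2) u0(1) iso
        by (auto simp: Cf_def)
      have v': "v (2*Suc m) * ?b + v (2*Suc m + 1) * ?a = 0" using v by (simp add: Cf_def)
      show ?thesis
      proof (cases "?a = 0")
        case True
        then have "?b \<noteq> 0" using ab by simp
        then have "u (2*Suc m) = 0" "v (2*Suc m) = 0" using c v' True by simp_all
        then show ?thesis by (simp add: Cf_def)
      next
        case False
        have "u (2*Suc m+1) = ?b * u (2*Suc m) / ?a" using c False sum_eq0
          by (metis mult.commute nonzero_eq_divide_eq mult.left_commute)
        then have "Cf (Suc m) v u = (u (2*Suc m) / ?a) * (v (2*Suc m) * ?b + v (2*Suc m + 1) * ?a)"
          using False by (simp add: Cf_def field_simps)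
        then show ?thesis using v' by simp
      qed
    qed
    have eq: "Bset m b U = {v\<in>Vp (Suc m). Cf (Suc m) v u0 = 0}"
      using F u0(1) propo by (auto simp: Bset_def Z_def)
    let ?t = "if ?b \<noteq> 0 then unitv (2*Suc m) else unitv (2*Suc m + 1) :: nat \<Rightarrow> 'a"
    have tV: "?t \<in> Vp (Suc m)" using m by (auto simp: Vp_def unitv_def)
    have tC: "Cf (Suc m) ?t u0 \<noteq> 0" using ab by (auto simp: Cf_def unitv_def)
    have linc: "\<And>x y. x \<in> Vp (Suc m) \<Longrightarrow> y \<in> Vp (Suc m) \<Longrightarrow> Cf (Suc m) (x + y) u0 = Cf (Suc m) x u0 + Cf (Suc m) y u0"
      "\<And>c x. x \<in> Vp (Suc m) \<Longrightarrow> Cf (Suc m) (vscale c x) u0 = c * Cf (Suc m) x u0"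
      by (simp_all add: Cf_add Cf_scale)
    have "card (Vp (Suc m)) = card (UNIV::'a set) * card {v\<in>Vp (Suc m). Cf (Suc m) v u0 = 0}"
      by (rule hyperplane_card(1)[OF Vp_sub fin_Vp linc tV tC])
    then have "card (Bset m b U) = card (UNIV::'a set) ^ (2*m+1)" using card_Vp eq by simp
    then show ?thesis using F False by simp
  qed
qed

end


definition supp :: "nat set \<Rightarrow> (nat \<Rightarrow> 'a::zero) set" where
  "supp T = {x. \<forall>i. i \<notin> T \<longrightarrow> x i = 0}"

lemma supp_card: "finite T \<Longrightarrow> card (supp T :: (nat \<Rightarrow> 'a::{zero,finite}) set) = card (UNIV::'a set) ^ card T"
  and supp_fin: "finite T \<Longrightarrow> finite (supp T :: (nat \<Rightarrow> 'a::{zero,finite}) set)"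
  using card_supp unfolding supp_def by blast+

lemma supp_nz_card:
  assumes "finite T" "j \<in> T"
  shows "card {w \<in> supp T. w j \<noteq> (0::'a::{zero,finite})} = card (UNIV::'a set) ^ card T - card (UNIV::'a set) ^ (card T - 1)"
proof -
  have "{w \<in> supp T. w j \<noteq> (0::'a)} = supp T - supp (T - {j})" by (auto simp: supp_def)
  moreover have "supp (T - {j}) \<subseteq> (supp T :: (nat \<Rightarrow> 'a) set)" by (auto simp: supp_def)
  ultimately show ?thesis using card_Diff_subset[of "supp (T - {j}) :: (nat \<Rightarrow> 'a) set" "supp T"]
      supp_card[of T, where 'a='a] supp_card[of "T - {j}", where 'a='a] supp_fin[of "T - {j}", where 'a='a] assms
    by simp
qed

context qsetup begin

lemma solve_coord:
  fixes F :: "(nat \<Rightarrow> 'a) \<Rightarrow> 'a"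
  assumes T: "finite T" "j \<in> T" "j' \<in> T" "j \<noteq> j'"
    and F: "\<And>w. F w = F (w(j := 0)) + w j * w j'"
  shows "card {w \<in> supp T. w j' \<noteq> 0 \<and> F w = 0} = card {w \<in> supp (T - {j}). w j' \<noteq> (0::'a)}"
proof -
  have "bij_betw (\<lambda>w. w(j := 0)) {w \<in> supp T. w j' \<noteq> 0 \<and> F w = 0} {w \<in> supp (T - {j}). w j' \<noteq> (0::'a)}"
  proof (rule bij_betw_byWitness[where f'="\<lambda>y. y(j := F y / y j')"])
    show "\<forall>w\<in>{w \<in> supp T. w j' \<noteq> 0 \<and> F w = 0}. (w(j := 0))(j := F (w(j := 0)) / (w(j := 0)) j') = w"
    proof
      fix w assume w: "w \<in> {w \<in> supp T. w j' \<noteq> 0 \<and> F w = 0}"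
      then have "F (w(j := 0)) = w j * w j'" using F[of w] sum_eq0 by auto
      then show "(w(j := 0))(j := F (w(j := 0)) / (w(j := 0)) j') = w" using w T(4) by (auto simp: fun_eq_iff)
    qed
    show "\<forall>y\<in>{w \<in> supp (T - {j}). w j' \<noteq> 0}. (y(j := F y / y j'))(j := 0) = y"
      by (auto simp: supp_def fun_eq_iff)
    show "(\<lambda>w. w(j := 0)) ` {w \<in> supp T. w j' \<noteq> 0 \<and> F w = 0} \<subseteq> {w \<in> supp (T - {j}). w j' \<noteq> 0}"
      using T(4) by (auto simp: supp_def)
    show "(\<lambda>y. y(j := F y / y j')) ` {w \<in> supp (T - {j}). w j' \<noteq> 0} \<subseteq> {w \<in> supp T. w j' \<noteq> 0 \<and> F w = 0}"
    proof
      fix x assume "x \<in> (\<lambda>y. y(j := F y / y j')) ` {w \<in> supp (T - {j}). w j' \<noteq> 0}"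
      then obtain y where y: "y \<in> supp (T - {j})" "y j' \<noteq> 0" "x = y(j := F y / y j')" by blast
      have yj: "y(j := 0) = y" using y(1) by (auto simp: supp_def fun_eq_iff)
      have "F x = F y + F y / y j' * y j'" using F[of x] y(3) T(4) yj by simp
      also have "\<dots> = 0" using y(2) by simp
      finally show "x \<in> {w \<in> supp T. w j' \<noteq> 0 \<and> F w = 0}" using y T by (auto simp: supp_def)
    qed
  qed
  then show ?thesis by (rule bij_betw_same_card)
qed

definition Xs where "Xs = {w \<in> coordspace 6. Q 2 w = 0 \<and> w \<notin> K0 2}"

lemma card_Xs: "card Xs = card (UNIV::'a set) ^ 5 - card (UNIV::'a set) ^ 3"
proof -
  let ?q = "card (UNIV::'a set)"
  define X1 where "X1 = {w \<in> supp {1,2,3,4,5,6}. w 4 \<noteq> 0 \<and> Q 2 w = 0}"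
  define X2 where "X2 = {w \<in> supp {1,2,3,5,6}. w 5 \<noteq> 0 \<and> Q 2 w = 0}"
  have "{1..6::nat} = {1,2,3,4,5,6}" by auto
  then have c6: "coordspace 6 = (supp {1,2,3,4,5,6} :: (nat \<Rightarrow> 'a) set)" by (simp add: coordspace_def supp_def)
  have XU: "Xs = X1 \<union> X2" unfolding Xs_def X1_def X2_def c6 by (auto simp: K0_def supp_def)
  have Xd: "X1 \<inter> X2 = {}" unfolding X1_def X2_def by (auto simp: supp_def)
  have F3: "Q 2 w = Q 2 (w(3 := 0)) + w 3 * w 4" for w unfolding Q2 by (simp add: algebra_simps)
  have F2: "Q 2 w = Q 2 (w(2 := 0)) + w 2 * w 5" for w unfolding Q2 by (simp add: algebra_simps)
  have "card X1 = card {w \<in> supp ({1,2,3,4,5,6} - {3}). w 4 \<noteq> (0::'a)}"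
    unfolding X1_def by (rule solve_coord[OF _ _ _ _ F3]) auto
  also have "\<dots> = ?q ^ 5 - ?q ^ 4" by (subst supp_nz_card) (auto simp: eval_nat_numeral)
  finally have c1: "card X1 = ?q ^ 5 - ?q ^ 4" .
  have "card X2 = card {w \<in> supp ({1,2,3,5,6} - {2}). w 5 \<noteq> (0::'a)}"
    unfolding X2_def by (rule solve_coord[OF _ _ _ _ F2]) auto
  also have "\<dots> = ?q ^ 4 - ?q ^ 3" by (subst supp_nz_card) (auto simp: eval_nat_numeral)
  finally have c2: "card X2 = ?q ^ 4 - ?q ^ 3" .
  have f: "finite X1" "finite X2"
    by (rule finite_subset[OF _ supp_fin[of "{1,2,3,4,5,6::nat}"]], simp add: X1_def, simp)
       (rule finite_subset[OF _ supp_fin[of "{1,2,3,5,6::nat}"]], simp add: X2_def, simp)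
  have "card Xs = card X1 + card X2" unfolding XU using card_Un_disjoint[OF f Xd] .
  moreover have "?q ^ 3 \<le> ?q ^ 4" "?q ^ 4 \<le> ?q ^ 5" using q_ge2[where 'a='a] by (simp_all add: power_increasing)
  ultimately show ?thesis using c1 c2 by simp
qed

end


context qsetup begin

definition uu :: "(nat \<Rightarrow> 'a) \<Rightarrow> (nat \<Rightarrow> 'a)" where
  "uu w = (\<lambda>i. if i = 2 then w 4 else if i = 3 then w 5 else 0)"
definition Wv where "Wv w = (\<lambda>(c,d). vscale c w + vscale d (uu w)) ` (UNIV :: ('a \<times> 'a) set)"
definition G1 where "G1 = {W \<in> GS 2 False. \<not> W \<subseteq> K0 2}"

lemma Pol_L2: "t \<in> L2 \<Longrightarrow> Pol 2 t w = t 2 * w 5 + t 3 * w 4"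
  unfolding Pol_def B0_split SS2 Cf_def L2_def by simp

lemma uu_facts:
  shows "uu w \<in> L2" "uu w \<in> K0 2" "Q 2 (uu w) = 0" "Pol 2 (uu w) w = 0" "uu w \<in> coordspace 6"
    "\<And>y. Cf 2 (uu w) y = 0"
proof -
  show L: "uu w \<in> L2" by (simp add: uu_def L2_def)
  show "uu w \<in> K0 2" by (simp add: uu_def K0_def)
  show "Q 2 (uu w) = 0" unfolding Q2 by (simp add: uu_def)
  show "Pol 2 (uu w) w = 0" using Pol_L2[OF L, of w] by (simp add: uu_def mult.commute)
  show "uu w \<in> coordspace 6" by (simp add: uu_def coordspace_def)
  show "\<And>y. Cf 2 (uu w) y = 0" by (simp add: uu_def Cf_def)
qed

lemma K0_coord: "x \<in> K0 2 \<longleftrightarrow> x 4 = 0 \<and> x 5 = 0" by (simp add: K0_def)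

lemma Wv_elem_K0:
  assumes w: "w \<notin> K0 2"
  shows "vscale c w + vscale d (uu w) \<in> K0 2 \<longleftrightarrow> c = 0"
proof
  assume "vscale c w + vscale d (uu w) \<in> K0 2"
  then have "c * w 4 = 0" "c * w 5 = 0" by (auto simp: K0_def vscale_apply uu_def)
  then show "c = 0" using w by (auto simp: K0_def)
next
  assume "c = 0"
  then show "vscale c w + vscale d (uu w) \<in> K0 2" by (simp add: K0_def vscale_apply uu_def)
qed

lemma card_UNIV2: "card (UNIV :: ('a \<times> 'a) set) = card (UNIV::'a set) * card (UNIV::'a set)"
  by (metis UNIV_Times_UNIV card_cartesian_product)

lemma Wv_inj:
  assumes w: "w \<notin> K0 2"
  shows "inj (\<lambda>(c,d). vscale c w + vscale d (uu w))"
proof (rule injI, clarsimp)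
  fix c d c' d' assume eq: "vscale c w + vscale d (uu w) = vscale c' w + vscale d' (uu w)"
  have e4: "c * w 4 = c' * w 4" and e5: "c * w 5 = c' * w 5"
    using fun_cong[OF eq, of 4] fun_cong[OF eq, of 5] by (auto simp: vscale_apply uu_def)
  have cc: "c = c'" using e4 e5 w by (auto simp: K0_def)
  have e2: "d * w 4 = d' * w 4" and e3: "d * w 5 = d' * w 5"
    using fun_cong[OF eq, of 2] fun_cong[OF eq, of 3] cc by (auto simp: vscale_apply uu_def)
  have "d = d'" using e2 e3 w by (auto simp: K0_def)
  then show "c = c' \<and> d = d'" using cc by simp
qed

lemma Wv_props:
  assumes w: "w \<in> Xs"
  shows "Wv w \<in> G1 \<and> w \<in> Wv w"
proof -
  have wc: "w \<in> coordspace 6" "Q 2 w = 0" "w \<notin> K0 2" using w by (auto simp: Xs_def)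
  let ?u = "uu w"
  have memb: "\<And>x. x \<in> Wv w \<Longrightarrow> \<exists>c d. x = vscale c w + vscale d ?u" unfolding Wv_def by auto
  have card: "card (Wv w) = card (UNIV::'a set) ^ 2"
    unfolding Wv_def using card_image[OF Wv_inj[OF wc(3)]] by (simp add: card_UNIV2 power2_eq_square)
  have sub: "VS.subspace (Wv w)"
  proof (rule VS.subspaceI)
    show "0 \<in> Wv w" unfolding Wv_def by (intro rev_image_eqI[of "(0,0)"]) (auto simp: fun_eq_iff vscale_apply)
    show "x + y \<in> Wv w" if xy: "x \<in> Wv w" "y \<in> Wv w" for x y
    proof -
      obtain c d where c1: "x = vscale c w + vscale d ?u" using memb[OF xy(1)] by blast
      obtain c' d' where c2: "y = vscale c' w + vscale d' ?u" using memb[OF xy(2)] by blast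
      note c1 c2
      then have "x + y = vscale (c + c') w + vscale (d + d') ?u" by (simp add: fun_eq_iff vscale_apply algebra_simps)
      then show ?thesis unfolding Wv_def by (intro rev_image_eqI[of "(c + c', d + d')"]) auto
    qed
    show "vscale a x \<in> Wv w" if xx: "x \<in> Wv w" for a x
    proof -
      obtain c d where "x = vscale c w + vscale d ?u" using memb[OF xx] by blast
      then have "vscale a x = vscale (a * c) w + vscale (a * d) ?u" by (simp add: fun_eq_iff vscale_apply algebra_simps)
      then show ?thesis unfolding Wv_def by (intro rev_image_eqI[of "(a * c, a * d)"]) auto
    qed
  qed
  have co: "Wv w \<subseteq> coordspace 6"
  proof
    fix x assume "x \<in> Wv w"
    then obtain c d where "x = vscale c w + vscale d ?u" using memb by blast
    then show "x \<in> coordspace 6" using wc(1) uu_facts(5)[of w] coord_sub VS.subspace_add VS.subspace_scale by metis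
  qed
  have qz: "\<forall>x\<in>Wv w. Q 2 x = 0"
  proof
    fix x assume "x \<in> Wv w"
    then obtain c d where x: "x = vscale c w + vscale d ?u" using memb by blast
    have "Pol 2 w ?u = 0" using uu_facts(4)[of w] Pol_sym by metis
    then show "Q 2 x = 0" unfolding x using wc(2) uu_facts(3)[of w] by (simp add: Q_add Q_scale Pol_scale)
  qed
  have cf: "\<forall>x\<in>Wv w. \<forall>y\<in>Wv w. Cf 2 x y = 0"
  proof (intro ballI)
    fix x y assume "x \<in> Wv w" "y \<in> Wv w"
    then obtain c d c' d' where x: "x = vscale c w + vscale d ?u" and y: "y = vscale c' w + vscale d' ?u"
      using memb by blast
    have "Cf 2 w ?u = 0" using uu_facts(6)[of w] Cf_sym by metis
    then show "Cf 2 x y = 0" unfolding x y using uu_facts(6)[of w] by (simp add: Cf_add Cf_scale)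
  qed
  have wW: "w \<in> Wv w" unfolding Wv_def by (intro rev_image_eqI[of "(1,0)"]) (auto simp: fun_eq_iff vscale_apply)
  show ?thesis using sub co qz cf card wW wc(3) by (auto simp: G1_def GS_def TS_def Z_def)
qed

lemma W_eq:
  assumes W: "W \<in> GS 2 False" and w: "w \<in> W" "w \<notin> K0 2"
  shows "W = Wv w"
proof -
  have T: "TS 2 W" and cW: "card W = card (UNIV::'a set) ^ 2" using W by (auto simp: GS_def)
  have sW: "VS.subspace W" using T by (simp add: TS_def)
  have sub: "W \<subseteq> Wv w"
  proof
    fix x assume x: "x \<in> W"
    define j where "j = (if w 4 \<noteq> 0 then 4 else (5::nat))"
    have wj: "w j \<noteq> 0" using w(2) by (auto simp: j_def K0_def)
    define c where "c = x j / w j"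
    define t where "t = x - vscale c w"
    have tW: "t \<in> W" unfolding t_def using x w(1) sW VS.subspace_diff VS.subspace_scale by blast
    have tj: "t j = 0" using wj by (simp add: t_def c_def vscale_apply)
    have "Cf 2 w t = 0" using T w(1) tW by (auto simp: TS_def)
    then have cwt: "w 4 * t 5 + w 5 * t 4 = 0" by (simp add: Cf_def)
    have tK: "t 4 = 0 \<and> t 5 = 0"
    proof (cases "w 4 \<noteq> 0")
      case True then have "t 4 = 0" using tj by (simp add: j_def)
      then show ?thesis using cwt True by simp
    next
      case False then have "t 5 = 0" "w 5 \<noteq> 0" using tj w(2) by (auto simp: j_def K0_def)
      then show ?thesis using cwt False by simp
    qed
    have tL: "t \<in> L2" using sing_K0[of t] tK tW T by (auto simp: TS_def)
    have "Pol 2 t w = 0" using Pol_TS[OF T tW w(1)] .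
    then have p: "t 2 * w 5 = t 3 * w 4" using Pol_L2[OF tL, of w] sum_eq0 by simp
    define d where "d = (if w 4 \<noteq> 0 then t 2 / w 4 else t 3 / w 5)"
    have "t = vscale d (uu w)"
    proof
      fix i
      show "t i = vscale d (uu w) i"
      proof (cases "i = 2 \<or> i = 3")
        case True
        show ?thesis
        proof (cases "w 4 \<noteq> 0")
          case w4: True
          have "t 3 = t 2 / w 4 * w 5" using p w4 by (simp add: field_simps)
          then show ?thesis using True w4 by (auto simp: d_def vscale_apply uu_def)
        next
          case w4: False
          then have w5: "w 5 \<noteq> 0" using w(2) by (auto simp: K0_def)
          then have "t 2 = 0" using p w4 by simp
          then show ?thesis using True w4 w5 by (auto simp: d_def vscale_apply uu_def)
        qed
      next
        case False
        then show ?thesis using tL by (auto simp: L2_def vscale_apply uu_def)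
      qed
    qed
    then have "x = vscale c w + vscale d (uu w)" unfolding t_def by (simp add: algebra_simps)
    then show "x \<in> Wv w" unfolding Wv_def by (intro rev_image_eqI[of "(c, d)"]) auto
  qed
  have fin: "finite (Wv w)" unfolding Wv_def by simp
  have cV: "card (Wv w) = card (UNIV::'a set) ^ 2"
    unfolding Wv_def using card_image[OF Wv_inj[OF w(2)]] by (simp add: card_UNIV2 power2_eq_square)
  show ?thesis using card_subset_eq[OF fin sub] cW cV by simp
qed

lemma fiber2:
  assumes W: "W \<in> G1"
  shows "card {x\<in>W. x \<notin> K0 2} = card (UNIV::'a set) ^ 2 - card (UNIV::'a set)"
proof -
  obtain w where w: "w \<in> W" "w \<notin> K0 2" using W by (auto simp: G1_def)
  have WW: "W = Wv w" using W_eq[OF _ w] W by (simp add: G1_def)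
  have "{x\<in>W. x \<notin> K0 2} = (\<lambda>(c,d). vscale c w + vscale d (uu w)) ` ((UNIV - {0}) \<times> UNIV)"
  proof safe
    fix x assume "x \<in> W" "x \<notin> K0 2"
    then obtain c d where x: "x = vscale c w + vscale d (uu w)" unfolding WW Wv_def by auto
    then have "c \<noteq> 0" using Wv_elem_K0[OF w(2), of c d] \<open>x \<notin> K0 2\<close> by auto
    then show "x \<in> (\<lambda>(c,d). vscale c w + vscale d (uu w)) ` ((UNIV - {0}) \<times> UNIV)"
      unfolding x by (intro rev_image_eqI[of "(c,d)"]) auto
  next
    fix c d assume "c \<noteq> (0::'a)"
    then show "vscale c w + vscale d (uu w) \<in> W" unfolding WW Wv_def by auto
  next
    fix c d assume "c \<noteq> (0::'a)" "vscale c w + vscale d (uu w) \<in> K0 2"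
    then show False using Wv_elem_K0[OF w(2)] by simp
  qed
  moreover have "inj_on (\<lambda>(c,d). vscale c w + vscale d (uu w)) ((UNIV - {0}) \<times> UNIV)"
    using Wv_inj[OF w(2)] by (rule inj_on_subset) simp
  ultimately have "card {x\<in>W. x \<notin> K0 2} = card ((UNIV - {0::'a}) \<times> (UNIV::'a set))"
    by (simp add: card_image)
  also have "\<dots> = (card (UNIV::'a set) - 1) * card (UNIV::'a set)" by (simp add: card_cartesian_product card_Diff_singleton)
  also have "\<dots> = card (UNIV::'a set) ^ 2 - card (UNIV::'a set)" by (simp add: power2_eq_square algebra_simps)
  finally show ?thesis .
qed

lemma card_G1: "card G1 = card (UNIV::'a set) ^ 3 + card (UNIV::'a set) ^ 2"
proof -
  let ?P = "Sigma G1 (\<lambda>W. {x\<in>W. x \<notin> K0 2})"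
  have bij: "bij_betw snd ?P Xs"
  proof (rule bij_betw_byWitness[where f'="\<lambda>w. (Wv w, w)"])
    show "\<forall>p\<in>?P. (Wv (snd p), snd p) = p" using W_eq by (auto simp: G1_def)
    show "\<forall>w\<in>Xs. snd (Wv w, w) = w" by simp
    show "snd ` ?P \<subseteq> Xs" by (auto simp: G1_def GS_def TS_def Xs_def)
    show "(\<lambda>w. (Wv w, w)) ` Xs \<subseteq> ?P" using Wv_props by (auto simp: Xs_def)
  qed
  have fG1: "finite G1" using finite_GS[of 2 False] by (simp add: G1_def)
  have "card ?P = (\<Sum>W\<in>G1. card {x\<in>W. x \<notin> K0 2})"
    by (rule card_SigmaI) (use fG1 finite_TS in \<open>auto simp: G1_def GS_def\<close>)
  also have "\<dots> = card G1 * (card (UNIV::'a set) ^ 2 - card (UNIV::'a set))" using fiber2 by simp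
  finally have "card G1 * (card (UNIV::'a set) ^ 2 - card (UNIV::'a set)) = card (UNIV::'a set) ^ 5 - card (UNIV::'a set) ^ 3" using bij_betw_same_card[OF bij] card_Xs by simp
  also have "card (UNIV::'a set) ^ 5 - card (UNIV::'a set) ^ 3 = (card (UNIV::'a set) ^ 3 + card (UNIV::'a set) ^ 2) * (card (UNIV::'a set) ^ 2 - card (UNIV::'a set))"
    by (simp add: algebra_simps eval_nat_numeral diff_mult_distrib2)
  finally have eq: "card G1 * (card (UNIV::'a set) ^ 2 - card (UNIV::'a set)) = (card (UNIV::'a set) ^ 3 + card (UNIV::'a set) ^ 2) * (card (UNIV::'a set) ^ 2 - card (UNIV::'a set))" .
  have "card (UNIV::'a set) < card (UNIV::'a set) ^ 2" using q_ge2[where 'a='a] by (simp add: power2_eq_square)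
  then have "card (UNIV::'a set) ^ 2 - card (UNIV::'a set) > 0" by simp
  then show ?thesis using eq by simp
qed

lemma GS2True: "GS 2 True = {L2}"
proof -
  have L: "L2 \<in> GS 2 True"
  proof -
    have "L2 \<subseteq> coordspace 6" by (auto simp: L2_def coordspace_def)
    moreover have "\<forall>x\<in>L2. Q 2 x = 0" unfolding Q2 by (simp add: L2_def)
    moreover have "\<forall>x\<in>L2. \<forall>y\<in>L2. Cf 2 x y = 0" by (simp add: L2_def Cf_def)
    moreover have "L2 \<subseteq> K0 2" by (auto simp: L2_def K0_def)
    ultimately show ?thesis using L2_sub L2_card by (auto simp: GS_def TS_def Z_def)
  qed
  moreover have "W = L2" if "W \<in> GS 2 True" for W
  proof -
    have T: "TS 2 W" "card W = card (UNIV::'a set) ^ 2" "W \<subseteq> K0 2" using that by (auto simp: GS_def Z_def)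
    have "W \<subseteq> L2" using T sing_K0 by (auto simp: TS_def K0_def)
    then show ?thesis using card_subset_eq[OF L2_fin] T(2) L2_card by simp
  qed
  ultimately show ?thesis by blast
qed

lemma base_real: "card (GS 2 True) = 1 \<and> card (GS 2 False) = card (UNIV::'a set) ^ 3 + card (UNIV::'a set) ^ 2 + 1"
proof -
  have un: "GS 2 False = GS 2 True \<union> G1" by (auto simp: G1_def GS_def Z_def)
  have dj: "GS 2 True \<inter> G1 = {}" by (auto simp: G1_def GS_def Z_def)
  have fG: "finite G1" using finite_GS[of 2 False] by (simp add: G1_def)
  have "card (GS 2 True \<union> G1) = card (GS 2 True) + card G1"
    by (rule card_Un_disjoint) (simp_all add: fG dj finite_GS)
  then have "card (GS 2 False) = 1 + card G1" using un GS2True by simp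
  then show ?thesis using card_G1 GS2True by simp
qed

end


context qsetup begin

lemma GS_split:
  assumes m: "m \<ge> 2"
  shows "card (GS (Suc m) b) = card (GS m b) + card (C2 m b)"
proof -
  have "GS (Suc m) b = {W \<in> GS (Suc m) b. unitv (m+2) \<in> W} \<union> C2 m b" by (auto simp: C2_def)
  moreover have "{W \<in> GS (Suc m) b. unitv (m+2) \<in> W} \<inter> C2 m b = {}" by (auto simp: C2_def)
  moreover have "finite (GS (Suc m) b)" by (rule finite_GS)
  ultimately have "card (GS (Suc m) b) = card {W \<in> GS (Suc m) b. unitv (m+2) \<in> W} + card (C2 m b)"
    by (metis (no_types, lifting) card_Un_disjoint finite_Un)
  then show ?thesis using class1[OF m] GP_card[OF m] by simp
qed

lemma rec_True:
  assumes m: "m \<ge> 2"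
  shows "card (GS (Suc m) True) = (1 + card (UNIV::'a set) ^ m) * card (GS m True)"
proof -
  have "card (C2 m True) * card (UNIV::'a set) ^ m = (\<Sum>U\<in>GP m True. card (Bset m True U))"
    using class2_sum[OF m] Aset_Bset[OF m] by simp
  also have "\<dots> = (\<Sum>U\<in>GP m True. card (UNIV::'a set) ^ (2*m))"
    by (rule sum.cong) (use Bset_card[OF m] in \<open>auto simp: GP_def\<close>)
  also have "\<dots> = card (GS m True) * card (UNIV::'a set) ^ (2*m)" using GP_card[OF m] by simp
  finally have "card (C2 m True) * card (UNIV::'a set) ^ m = (card (GS m True) * card (UNIV::'a set) ^ m) * card (UNIV::'a set) ^ m"
    by (simp add: power_add mult_2 mult.assoc)
  then have "card (C2 m True) = card (GS m True) * card (UNIV::'a set) ^ m" using q_ge2[where 'a='a] by simp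
  then show ?thesis using GS_split[OF m] by (simp add: algebra_simps)
qed

lemma rec_False:
  assumes m: "m \<ge> 2"
  shows "card (GS (Suc m) False) + card (UNIV::'a set) ^ (m+1) * card (GS m True)
     = card (GS m False) + card (UNIV::'a set) ^ (m+2) * card (GS m True) + card (UNIV::'a set) ^ (m+1) * card (GS m False)"
proof -
  let ?A = "{U \<in> GP m False. U \<subseteq> K0 (Suc m)}" and ?B = "{U \<in> GP m False. \<not> U \<subseteq> K0 (Suc m)}"
  have fin: "finite (GP m False)" by (rule finite_GP)
  have GPT: "GP m True = ?A" by (auto simp: GP_def Z_def)
  have "card (C2 m False) * card (UNIV::'a set) ^ m = (\<Sum>U\<in>GP m False. card (Bset m False U))"
    using class2_sum[OF m] Aset_Bset[OF m] by simp
  also have "\<dots> = (\<Sum>U\<in>GP m False. if U \<subseteq> K0 (Suc m) then card (UNIV::'a set) ^ (2*m+2) else card (UNIV::'a set) ^ (2*m+1))"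
    by (rule sum.cong) (use Bset_card[OF m] in \<open>auto simp: GP_def\<close>)
  also have "\<dots> = sum (\<lambda>_. card (UNIV::'a set) ^ (2*m+2)) (GP m False \<inter> {U. U \<subseteq> K0 (Suc m)})
      + sum (\<lambda>_. card (UNIV::'a set) ^ (2*m+1)) (GP m False \<inter> - {U. U \<subseteq> K0 (Suc m)})"
    by (rule sum.If_cases[OF fin])
  also have "GP m False \<inter> {U. U \<subseteq> K0 (Suc m)} = ?A" by blast
  also have "GP m False \<inter> - {U. U \<subseteq> K0 (Suc m)} = ?B" by blast
  also have "sum (\<lambda>_. card (UNIV::'a set) ^ (2*m+2)) ?A + sum (\<lambda>_. card (UNIV::'a set) ^ (2*m+1)) ?B = card ?A * card (UNIV::'a set) ^ (2*m+2) + card ?B * card (UNIV::'a set) ^ (2*m+1)"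
    by simp
  finally have eq: "card (C2 m False) * card (UNIV::'a set) ^ m = card ?A * card (UNIV::'a set) ^ (2*m+2) + card ?B * card (UNIV::'a set) ^ (2*m+1)" .
  have cA: "card ?A = card (GS m True)" using GP_card[OF m, of True] unfolding GPT .
  have un: "?A \<union> ?B = GP m False" by blast
  have cAB: "card ?A + card ?B = card (GS m False)"
  proof -
    have "?A \<inter> ?B = {}" by blast
    then have "card (?A \<union> ?B) = card ?A + card ?B" using fin by (intro card_Un_disjoint) auto
    then show ?thesis using GP_card[OF m, of False] un by simp
  qed
  have "card (C2 m False) * card (UNIV::'a set) ^ m = (card ?A * card (UNIV::'a set) ^ (m+2) + card ?B * card (UNIV::'a set) ^ (m+1)) * card (UNIV::'a set) ^ m"
  proof -
    have pw: "card (UNIV::'a set)^(2*m+2) = card (UNIV::'a set)^(m+2)*card (UNIV::'a set)^m" "card (UNIV::'a set)^(2*m+1) = card (UNIV::'a set)^(m+1)*card (UNIV::'a set)^m"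
      by (simp_all add: mult_2 flip: power_add)
    show ?thesis using eq unfolding pw by (simp add: algebra_simps)
  qed
  then have c2: "card (C2 m False) = card ?A * card (UNIV::'a set) ^ (m+2) + card ?B * card (UNIV::'a set) ^ (m+1)"
    using q_ge2[where 'a='a] by simp
  show ?thesis using GS_split[OF m, of False] c2 cA cAB[symmetric] by (simp add: algebra_simps)
qed

lemma base: "card (GS 2 True) = 1 \<and> card (GS 2 False) = card (UNIV::'a set) ^ 3 + card (UNIV::'a set) ^ 2 + 1"
  by (rule base_real)

definition PP :: "nat \<Rightarrow> nat" where "PP n = (\<Prod>j\<in>{2..<n}. card (UNIV::'a set) ^ j + 1)"

lemma closed:
  assumes "n \<ge> 2"
  shows "card (GS n True) = PP n \<and> card (GS n False) = (card (UNIV::'a set) ^ (n+1) + card (UNIV::'a set) ^ n + 1) * PP n"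
  using assms
proof (induction n rule: nat_induct_at_least)
  case base
  then show ?case using qsetup.base qsetup_axioms by (simp add: PP_def)
next
  case (Suc m)
  let ?q = "card (UNIV::'a set)"
  have PPs: "PP (Suc m) = (?q ^ m + 1) * PP m" unfolding PP_def using Suc.hyps
    by (simp add: prod.atLeastLessThan_Suc mult.commute)
  have A: "card (GS (Suc m) True) = PP (Suc m)" using rec_True[OF Suc.hyps] Suc.IH PPs by simp
  have "card (GS (Suc m) False) + ?q ^ (m+1) * PP m
     = (?q ^ (m+1) + ?q ^ m + 1) * PP m + ?q ^ (m+2) * PP m + ?q ^ (m+1) * ((?q ^ (m+1) + ?q ^ m + 1) * PP m)"
    using rec_False[OF Suc.hyps] Suc.IH by simp
  also have "\<dots> = (?q ^ (Suc m + 1) + ?q ^ Suc m + 1) * PP (Suc m) + ?q ^ (m+1) * PP m"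
    unfolding PPs by (simp add: algebra_simps power_add)
  finally have "card (GS (Suc m) False) = (?q ^ (Suc m + 1) + ?q ^ Suc m + 1) * PP (Suc m)" by simp
  then show ?case using A by simp
qed

end


context qsetup begin

lemma set_eq:
  "{W \<in> generators n \<delta> \<mu>. totally_isotropic_B0 n W} = GS n False"
proof -
  have "W \<in> generators n \<delta> \<mu> \<and> totally_isotropic_B0 n W \<longleftrightarrow> W \<in> GS n False" for W
  proof (cases "W \<subseteq> coordspace (2*n+2) \<and> VS.subspace W \<and> (\<forall>x\<in>W. Q n x = 0)")
    case True
    then have fW: "finite W" using finite_coordspace finite_subset by blast
    have T: "TS n (W \<inter> UNIV) \<longleftrightarrow> (\<forall>x\<in>W. \<forall>y\<in>W. Cf n x y = 0)" using True by (simp add: TS_def)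
    have iso: "(\<forall>x\<in>W. \<forall>y\<in>W. B0 n x y = 0) \<longleftrightarrow> (\<forall>x\<in>W. \<forall>y\<in>W. Cf n x y = 0)"
    proof -
      have "B0 n x y = \<mu> * Cf n x y" if "x \<in> W" "y \<in> W" for x y
      proof -
        have "x + y \<in> W" using True that VS.subspace_add by blast
        then have "Pol n x y = 0" using Q_add[of n x y] True that by simp
        then show ?thesis unfolding Pol_def using sum_eq0 by blast
      qed
      then show ?thesis using mu by auto
    qed
    show ?thesis using True dim_iff_card[OF _ fW, of n] iso
      by (auto simp: generators_def totally_isotropic_B0_def GS_def TS_def Z_def)
  next
    case False
    then show ?thesis by (auto simp: generators_def GS_def TS_def)
  qed
  then show ?thesis by blast
qed

lemma PP_eq: "n \<ge> 2 \<Longrightarrow> PP n = (\<Prod>i=1..n-2. card (UNIV::'a set) ^ (n-i) + 1)"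
  unfolding PP_def
  by (rule prod.reindex_bij_witness[where i="\<lambda>i. n - i" and j="\<lambda>j. n - j"]) auto

lemma main:
  assumes "n \<ge> 2"
  shows "card {W \<in> generators n \<delta> \<mu>. totally_isotropic_B0 n W}
     = (card (UNIV::'a set) ^ (n+1) + card (UNIV::'a set) ^ n + 1) * (\<Prod>i=1..n-2. card (UNIV::'a set) ^ (n-i) + 1)"
  using closed[OF assms] PP_eq[OF assms] set_eq by simp

end

theorem mainTheorem9:
  fixes \<delta> \<mu> :: "'a::{field,finite}" and n :: nat
  assumes "even (card (UNIV::'a set))"
    and "n \<ge> 2"
    and "irreducible [:\<delta>, 1, 1:]"
    and "\<mu> \<noteq> 0"
  shows "card {W \<in> generators n \<delta> \<mu>. totally_isotropic_B0 n W}
     = (card (UNIV::'a set) ^ (n+1) + card (UNIV::'a set) ^ n + 1) * (\<Prod>i=1..n-2. card (UNIV::'a set) ^ (n-i) + 1)"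
proof -
  interpret qsetup \<delta> \<mu>
    using char2[OF assms(1)] noroot[OF assms(3)] assms(4) by unfold_locales auto
  show ?thesis by (rule main[OF assms(2)])
qed


end
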